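(* Let $0<q<1$ and, for $x\in\mathcal{A}(S^2_q)$, let $\zeta_x(s)=\mathrm{Trace}_{\mathcal{H}}(\pi(x)|D|^{-s})$ for the spin representation $\pi$ and $D|l,m\rangle_\pm=(l+\tfrac12)|l,m\rangle_\mp$. Then $$\mathrm{Res}_{s=2}\zeta_x(s)=\frac{2}{\pi}\int_{S^1}\rho(x)\,\mathrm{d}\theta,$$ where $\rho:\mathcal{A}(S^2_q)\to C^\infty(S^1)$ is the $*$-algebra morphism with $\rho(a)(\theta)=e^{i\theta}$ and $\rho(b)=0$.
   Context: $\mathcal{A}(S^2_q)$ is the unital $*$-algebra generated by $a,a^*$ and $b=b^*$ with relations $ba=q^2ab$, $a^*a+b^2=1$, $q^4aa^*+b^2=q^4$. $\mathcal{H}=\mathcal{H}_+\oplus\mathcal{H}_-$, each $\mathcal{H}_\pm$ with orthonormal basis $|l,m\rangle_\pm$, $l\in\mathbb{N}+\tfrac12$, $m=-l,\dots,l$ (out-of-range vectors are $0$), and $\pi=\pi_+\oplus\pi_-$ with, using $[x]=(q^x-q^{-x})/(q-q^{-1})$: $\pi_\pm(a)|l,m\rangle_\pm=q^{m-l-\frac12}\frac{\sqrt{[l+m+1][l+m+2]}}{[2l+2]}|l+1,m+1\rangle_\pm-q^{m+l+\frac12}\frac{\sqrt{[l-m-1][l-m]}}{[2l]}|l-1,m+1\rangle_\pm\pm\frac{(1+q^2)q^{m-\frac12}}{[2l][2l+2]}\sqrt{[l+m+1][l-m]}\,|l,m+1\rangle_\pm$, $\pi_\pm(b)|l,m\rangle_\pm=-q^{m+1}\frac{\sqrt{[l+m+1][l-m+1]}}{[2l+2]}|l+1,m\rangle_\pm-q^{m+1}\frac{\sqrt{[l+m][l-m]}}{[2l]}|l-1,m\rangle_\pm\pm\frac{[l-m+1][l+m]-q^2[l-m][l+m+1]}{[2l][2l+2]}|l,m\rangle_\pm$.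 The function $\zeta_x$ is defined for $\mathrm{Re}\,s>2$ and extends meromorphically to $\mathbb{C}$. *)

theory Defs
  imports "HOL-Complex_Analysis.Complex_Analysis"
begin

text \<open>Basis vectors |l,m>_pm of H = H_+ (+) H_- are indexed by (s, n, k) with
  s = True for H_+, s = False for H_-, l = n + 1/2, m = k + 1/2.
  The vector exists iff -l <= m <= l, i.e. -n-1 <= k <= n.\<close>

type_synonym idx = "bool \<times> nat \<times> int"

definition valid :: "idx \<Rightarrow> bool" where
  "valid i = (case i of (s, n, k) \<Rightarrow> - int n - 1 \<le> k \<and> k \<le> int n)"

definition lval :: "idx \<Rightarrow> real" where
  "lval i = (case i of (s, n, k) \<Rightarrow> real n + 1/2)"

definition qnum :: "real \<Rightarrow> real \<Rightarrow> real" where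
  "qnum q x = (q powr x - q powr (-x)) / (q - inverse q)"

definition Ma :: "real \<Rightarrow> idx \<Rightarrow> idx \<Rightarrow> real" where
  "Ma q i j = (case i of (s', n', k') \<Rightarrow> case j of (s, n, k) \<Rightarrow>
     (let l = real n + 1/2; m = real_of_int k + 1/2; sg = (if s then 1 else -1::real) in
      if valid i \<and> valid j \<and> s' = s \<and> k' = k + 1 then
        (if n' = n + 1 then
           q powr (m - l - 1/2) * sqrt (qnum q (l+m+1) * qnum q (l+m+2)) / qnum q (2*l+2)
         else if n' + 1 = n then
           - (q powr (m + l + 1/2)) * sqrt (qnum q (l-m-1) * qnum q (l-m)) / qnum q (2*l)
         else if n' = n then
           sg * (1 + q^2) * q powr (m - 1/2) / (qnum q (2*l) * qnum q (2*l+2))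
              * sqrt (qnum q (l+m+1) * qnum q (l-m))
         else 0)
      else 0))"

definition Mb :: "real \<Rightarrow> idx \<Rightarrow> idx \<Rightarrow> real" where
  "Mb q i j = (case i of (s', n', k') \<Rightarrow> case j of (s, n, k) \<Rightarrow>
     (let l = real n + 1/2; m = real_of_int k + 1/2; sg = (if s then 1 else -1::real) in
      if valid i \<and> valid j \<and> s' = s \<and> k' = k then
        (if n' = n + 1 then
           - (q powr (m + 1)) * sqrt (qnum q (l+m+1) * qnum q (l-m+1)) / qnum q (2*l+2)
         else if n' + 1 = n then
           - (q powr (m + 1)) * sqrt (qnum q (l+m) * qnum q (l-m)) / qnum q (2*l)
         else if n' = n then
           sg * (qnum q (l-m+1) * qnum q (l+m) - q^2 * qnum q (l-m) * qnum q (l+m+1))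
              / (qnum q (2*l) * qnum q (2*l+2))
         else 0)
      else 0))"

datatype gen = GA | GAs | GB

text \<open>pi(a^*) = pi(a)^* (adjoint; coefficients are real).\<close>
definition Mgen :: "real \<Rightarrow> gen \<Rightarrow> idx \<Rightarrow> idx \<Rightarrow> real" where
  "Mgen q g i j = (case g of GA \<Rightarrow> Ma q i j | GAs \<Rightarrow> Ma q j i | GB \<Rightarrow> Mb q i j)"

text \<open>Indices j that can have a nonzero coefficient <i|pi(g)|j>.\<close>
definition nbr :: "idx \<Rightarrow> idx set" where
  "nbr i = (case i of (s, n, k) \<Rightarrow>
     {(s, n', k') | n' k'. n' \<le> n + 1 \<and> n \<le> n' + 1 \<and> k - 1 \<le> k' \<and> k' \<le> k + 1})"

definition apply_gen :: "real \<Rightarrow> gen \<Rightarrow> (idx \<Rightarrow> complex) \<Rightarrow> idx \<Rightarrow> complex" where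
  "apply_gen q g v = (\<lambda>i. \<Sum>j\<in>nbr i. complex_of_real (Mgen q g i j) * v j)"

definition apply_word :: "real \<Rightarrow> gen list \<Rightarrow> (idx \<Rightarrow> complex) \<Rightarrow> idx \<Rightarrow> complex" where
  "apply_word q w v = foldr (apply_gen q) w v"

definition basis :: "idx \<Rightarrow> idx \<Rightarrow> complex" where
  "basis i = (\<lambda>j. if j = i then 1 else 0)"

text \<open>Elements of A(S^2_q) are represented by noncommutative polynomials in a, a^*, b
  (finite linear combinations of words); both pi and rho respect the defining relations.\<close>
type_synonym ncpoly = "(complex \<times> gen list) list"

definition pi_entry :: "real \<Rightarrow> ncpoly \<Rightarrow> idx \<Rightarrow> idx \<Rightarrow> complex" where
  "pi_entry q x i j = (\<Sum>(c, w)\<leftarrow>x. c * apply_word q w (basis j) i)"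

definition zeta :: "real \<Rightarrow> ncpoly \<Rightarrow> complex \<Rightarrow> complex" where
  "zeta q x s = infsum (\<lambda>i. pi_entry q x i i * (complex_of_real (lval i + 1/2)) powr (- s))
                  {i. valid i}"

definition rho_gen :: "gen \<Rightarrow> real \<Rightarrow> complex" where
  "rho_gen g \<theta> = (case g of GA \<Rightarrow> exp (\<i> * of_real \<theta>) | GAs \<Rightarrow> exp (- \<i> * of_real \<theta>) | GB \<Rightarrow> 0)"

definition rho :: "ncpoly \<Rightarrow> real \<Rightarrow> complex" where
  "rho x \<theta> = (\<Sum>(c, w)\<leftarrow>x. c * (\<Prod>g\<leftarrow>w. rho_gen g \<theta>))"

end

theory Submission
  imports Defs
begin


lemma Qpos: "0 < (q::real) \<Longrightarrow> q < 1 \<Longrightarrow> 0 < inverse q - q"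
proof -
  assume "0<q" "q<1"
  then have "1 < inverse q" using one_less_inverse by blast
  then show ?thesis using \<open>q<1\<close> by linarith
qed

lemma qnum_alt: "0 < q \<Longrightarrow> q < 1 \<Longrightarrow> qnum q x = (q powr (-x) - q powr x) / (inverse q - q)"
proof -
  assume h: "0<q" "q<1"
  show ?thesis unfolding qnum_def by (metis minus_diff_eq minus_divide_divide)
qed

lemma powr_neg_abs: "0 < (q::real) \<Longrightarrow> q < 1 \<Longrightarrow> max (q powr (-x)) (q powr x) = q powr (-\<bar>x\<bar>)"
proof (cases "x \<ge> 0")
  case True
  assume "0<q" "q<1"
  then have "q powr x \<le> q powr (-x)" using True by (intro powr_mono') auto
  then show ?thesis using True by (simp add: max_def)
next
  case False
  assume "0<q" "q<1"
  then have "q powr (-x) \<le> q powr x" using False by (intro powr_mono') auto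
  then show ?thesis using False by (simp add: max_def)
qed

lemma qnum_abs_le: "0 < q \<Longrightarrow> q < 1 \<Longrightarrow> \<bar>qnum q x\<bar> \<le> q powr (-\<bar>x\<bar>) / (inverse q - q)"
proof -
  assume h: "0<q" "q<1"
  have Q: "0 < inverse q - q" using Qpos h by blast
  have "0 < q powr (-x)" "0 < q powr x" using h by auto
  then have "\<bar>q powr (-x) - q powr x\<bar> \<le> max (q powr (-x)) (q powr x)" by (auto simp: abs_if max_def)
  also have "\<dots> = q powr (-\<bar>x\<bar>)" using powr_neg_abs h by blast
  finally show ?thesis using Q by (simp add: qnum_alt[OF h] abs_div divide_right_mono)
qed

lemma qnum_ge: "0 < q \<Longrightarrow> q < 1 \<Longrightarrow> 1 \<le> x \<Longrightarrow> q powr (-x) * (1 - q^2) / (inverse q - q) \<le> qnum q x"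
proof -
  assume h: "0<q" "q<1" "1 \<le> x"
  have Q: "0 < inverse q - q" using Qpos h by blast
  have "q powr x = q powr (-x) * q powr (2*x)" by (simp add: powr_add[symmetric])
  moreover have "q powr (2*x) \<le> q powr 2" using h by (intro powr_mono') auto
  moreover have "q powr 2 = q^2" using h by (simp add: powr_numeral)
  ultimately have "q powr (-x) * (1 - q^2) \<le> q powr (-x) - q powr x"
    by (simp add: algebra_simps mult_left_mono)
  then show ?thesis using Q by (simp add: qnum_alt[OF h(1,2)] divide_right_mono)
qed

lemma qnum_pos: "0 < q \<Longrightarrow> q < 1 \<Longrightarrow> 0 < x \<Longrightarrow> 0 < qnum q x"
proof -
  assume h: "0<q" "q<1" "0 < x"
  have Q: "0 < inverse q - q" using Qpos h by blast
  have "q powr x < q powr (-x)" using h by (simp add: powr_less_mono')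
  then show ?thesis using Q by (simp add: qnum_alt[OF h(1,2)])
qed

lemma sqrt_abs_eq: "\<bar>sqrt z\<bar> = sqrt \<bar>z\<bar>"
  by (cases "z \<ge> 0") (auto simp: real_sqrt_minus[symmetric])

lemma sqrt_qq: "0 < q \<Longrightarrow> q < 1 \<Longrightarrow>
   \<bar>sqrt (qnum q x * qnum q y)\<bar> \<le> q powr (-(\<bar>x\<bar>+\<bar>y\<bar>)/2) / (inverse q - q)"
proof -
  assume h: "0<q" "q<1"
  have Q: "0 < inverse q - q" using Qpos h by blast
  have "\<bar>qnum q x * qnum q y\<bar> \<le> (q powr (-\<bar>x\<bar>) / (inverse q - q)) * (q powr (-\<bar>y\<bar>) / (inverse q - q))"
    unfolding abs_mult by (intro mult_mono qnum_abs_le h) (use Q in auto)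
  also have "\<dots> = (q powr (-(\<bar>x\<bar>+\<bar>y\<bar>)/2) / (inverse q - q))^2"
  proof -
    have "(q powr (-(\<bar>x\<bar>+\<bar>y\<bar>)/2))^2 = q powr (-\<bar>x\<bar>) * q powr (-\<bar>y\<bar>)"
      unfolding power2_eq_square powr_add[symmetric] by simp
    then show ?thesis by (simp add: power_divide power2_eq_square)
  qed
  finally have "sqrt \<bar>qnum q x * qnum q y\<bar> \<le> sqrt ((q powr (-(\<bar>x\<bar>+\<bar>y\<bar>)/2) / (inverse q - q))^2)"
    by (rule real_sqrt_le_mono)
  also have "\<dots> = q powr (-(\<bar>x\<bar>+\<bar>y\<bar>)/2) / (inverse q - q)" using Q by simp
  finally show ?thesis by (simp add: sqrt_abs_eq)
qed


lemma qnum_fact: "0 < q \<Longrightarrow> q < 1 \<Longrightarrow> qnum q x = q powr (-x) * (1 - q powr (2*x)) / (inverse q - q)"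
proof -
  assume h: "0 < q" "q < 1"
  have "q powr (-x) * q powr (2*x) = q powr x" by (simp add: powr_add[symmetric])
  then show ?thesis by (simp add: qnum_alt[OF h] right_diff_distrib)
qed

lemma frac_bound:
  fixes q N D a d c1 c2 P :: real
  assumes "0 < q" "q < 1" "\<bar>N\<bar> \<le> q powr a * c1" "q powr d * c2 \<le> D" "0 < c2" "0 \<le> c1" "P \<le> a - d"
  shows "\<bar>N / D\<bar> \<le> q powr P * (c1 / c2)"
proof -
  have qd: "0 < q powr d" using assms by simp
  have Dpos: "0 < D" using assms(4) qd assms(5) by (meson mult_pos_pos order_less_le_trans)
  have "\<bar>N / D\<bar> = \<bar>N\<bar> / D" using Dpos by (simp add: abs_div)
  also have "\<dots> \<le> (q powr a * c1) / (q powr d * c2)"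
    using assms Dpos qd by (intro frac_le) auto
  also have "\<dots> = q powr (a - d) * (c1 / c2)" by (simp add: powr_diff)
  also have "\<dots> \<le> q powr P * (c1 / c2)"
    using assms by (intro mult_right_mono powr_mono') auto
  finally show ?thesis .
qed

lemma qden1: "0 < q \<Longrightarrow> q < 1 \<Longrightarrow> 1/2 \<le> l \<Longrightarrow> q powr (-(2*l)) * ((1 - q^2) / (inverse q - q)) \<le> qnum q (2*l)"
  using qnum_ge[of q "2*l"] by simp

lemma qden2: "0 < q \<Longrightarrow> q < 1 \<Longrightarrow> 1/2 \<le> l \<Longrightarrow> q powr (-(2*l+2)) * ((1 - q^2) / (inverse q - q)) \<le> qnum q (2*l+2)"
  using qnum_ge[of q "2*l+2"] by simp

lemma qden12: "0 < q \<Longrightarrow> q < 1 \<Longrightarrow> 1/2 \<le> l \<Longrightarrow>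
   q powr (-(4*l+2)) * ((1 - q^2) / (inverse q - q))^2 \<le> qnum q (2*l) * qnum q (2*l+2)"
proof -
  assume h: "0 < q" "q < 1" "1/2 \<le> l"
  have Q: "0 < inverse q - q" using Qpos h by blast
  have c: "0 < (1 - q^2) / (inverse q - q)" using Q h by (simp add: power_less_one_iff abs_square_less_1)
  have "q powr (-(4*l+2)) * ((1 - q^2) / (inverse q - q))^2 =
     (q powr (-(2*l)) * ((1 - q^2) / (inverse q - q))) * (q powr (-(2*l+2)) * ((1 - q^2) / (inverse q - q)))"
  proof -
    have "q powr (-(4*l+2)) = q powr (-(2*l)) * q powr (-(2*l+2))" by (simp add: powr_add[symmetric])
    then show ?thesis by (simp add: power2_eq_square mult_ac)
  qed
  also have "\<dots> \<le> qnum q (2*l) * qnum q (2*l+2)"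
  proof (rule mult_mono[OF qden1[OF h] qden2[OF h]])
    show "0 \<le> qnum q (2*l)" using qnum_pos[OF h(1,2), of "2*l"] h by simp
    show "0 \<le> q powr (-(2*l+2)) * ((1 - q^2) / (inverse q - q))"
      by (rule mult_nonneg_nonneg) (use c in auto)
  qed
  finally show ?thesis .
qed

lemma Ma2_bound:
  fixes q l m :: real
  assumes h: "0 < q" "q < 1" and l: "1/2 \<le> l" "-l \<le> m" "m \<le> l"
  shows "\<bar>- (q powr (m + l + 1/2)) * sqrt (qnum q (l-m-1) * qnum q (l-m)) / qnum q (2*l)\<bar>
         \<le> q powr (l+m) * (1 / (1 - q^2))"
proof -
  have Q: "0 < inverse q - q" using Qpos h by blast
  have "\<bar>- (q powr (m + l + 1/2)) * sqrt (qnum q (l-m-1) * qnum q (l-m))\<bar>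
     \<le> q powr (m + l + 1/2) * (q powr (-(\<bar>l-m-1\<bar>+\<bar>l-m\<bar>)/2) / (inverse q - q))"
    unfolding abs_mult abs_minus_cancel
    apply (subst abs_of_nonneg[of "q powr _"], simp)
    by (rule mult_left_mono[OF sqrt_qq[OF h]]) simp
  also have "\<dots> = q powr (m + l + 1/2 + (-(\<bar>l-m-1\<bar>+\<bar>l-m\<bar>)/2)) * (1 / (inverse q - q))"
    unfolding powr_add by simp
  finally have N: "\<bar>- (q powr (m + l + 1/2)) * sqrt (qnum q (l-m-1) * qnum q (l-m))\<bar>
     \<le> q powr (m + l + 1/2 + (-(\<bar>l-m-1\<bar>+\<bar>l-m\<bar>)/2)) * (1 / (inverse q - q))" .
  have "\<bar>- (q powr (m + l + 1/2)) * sqrt (qnum q (l-m-1) * qnum q (l-m)) / qnum q (2*l)\<bar>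
     \<le> q powr (l+m) * ((1 / (inverse q - q)) / ((1 - q^2) / (inverse q - q)))"
  proof (rule frac_bound[OF h N qden1[OF h l(1)]])
    show "0 < (1 - q^2) / (inverse q - q)" using Q h by (simp add: power_less_one_iff abs_square_less_1)
    show "0 \<le> 1 / (inverse q - q)" using Q by simp
    show "l + m \<le> m + l + 1/2 + (-(\<bar>l-m-1\<bar>+\<bar>l-m\<bar>)/2) - - (2*l)"
    proof -
      have "\<bar>l-m-1\<bar> \<le> l-m+1" "\<bar>l-m\<bar> = l-m" using l by auto
      then have "\<bar>l-m-1\<bar>+\<bar>l-m\<bar> \<le> 1 + 2*l - 2*m" by simp
      then show ?thesis using l by (simp add: field_simps)
    qed
  qed
  also have "\<dots> = q powr (l+m) * (1 / (1 - q^2))" using Q by simp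
  finally show ?thesis .
qed


lemma qq_abs: "0 < q \<Longrightarrow> q < 1 \<Longrightarrow> \<bar>qnum q x * qnum q y\<bar> \<le> q powr (-(\<bar>x\<bar>+\<bar>y\<bar>)) * (1 / (inverse q - q)^2)"
proof -
  assume h: "0 < q" "q < 1"
  have Q: "0 < inverse q - q" using Qpos h by blast
  have "\<bar>qnum q x * qnum q y\<bar> \<le> (q powr (-\<bar>x\<bar>) / (inverse q - q)) * (q powr (-\<bar>y\<bar>) / (inverse q - q))"
    unfolding abs_mult by (intro mult_mono qnum_abs_le h) (use Q in auto)
  also have "\<dots> = q powr (-(\<bar>x\<bar>+\<bar>y\<bar>)) * (1 / (inverse q - q)^2)"
    unfolding minus_add_distrib powr_add by (simp add: power2_eq_square)
  finally show ?thesis .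
qed

lemma cpos: "0 < (q::real) \<Longrightarrow> q < 1 \<Longrightarrow> 0 < (1 - q^2) / (inverse q - q)"
  using Qpos[of q] by (simp add: power_less_one_iff abs_square_less_1)

lemma Ma3_bound:
  fixes q l m sg :: real
  assumes h: "0 < q" "q < 1" and l: "1/2 \<le> l" "-l \<le> m" "m \<le> l" and sg: "\<bar>sg\<bar> = 1"
  shows "\<bar>sg * (1 + q^2) * q powr (m - 1/2) / (qnum q (2*l) * qnum q (2*l+2))
              * sqrt (qnum q (l+m+1) * qnum q (l-m))\<bar>
         \<le> q powr (l+m) * (((1 + q^2) / (inverse q - q)) / ((1 - q^2) / (inverse q - q))^2)"
proof -
  have Q: "0 < inverse q - q" using Qpos h by blast
  have eq: "sg * (1 + q^2) * q powr (m - 1/2) / (qnum q (2*l) * qnum q (2*l+2))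
              * sqrt (qnum q (l+m+1) * qnum q (l-m))
     = (sg * (1 + q^2) * q powr (m - 1/2) * sqrt (qnum q (l+m+1) * qnum q (l-m))) / (qnum q (2*l) * qnum q (2*l+2))"
    by simp
  have "\<bar>sg * (1 + q^2) * q powr (m - 1/2) * sqrt (qnum q (l+m+1) * qnum q (l-m))\<bar>
     = (1 + q^2) * q powr (m - 1/2) * \<bar>sqrt (qnum q (l+m+1) * qnum q (l-m))\<bar>"
    using sg by (simp add: abs_mult)
  also have "\<dots> \<le> (1 + q^2) * q powr (m - 1/2) * (q powr (-(\<bar>l+m+1\<bar>+\<bar>l-m\<bar>)/2) / (inverse q - q))"
    by (rule mult_left_mono[OF sqrt_qq[OF h]]) simp
  also have "\<dots> = q powr (m - 1/2 + (-(\<bar>l+m+1\<bar>+\<bar>l-m\<bar>)/2)) * ((1 + q^2) / (inverse q - q))"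
    unfolding powr_add by simp
  finally have N: "\<bar>sg * (1 + q^2) * q powr (m - 1/2) * sqrt (qnum q (l+m+1) * qnum q (l-m))\<bar>
     \<le> q powr (m - 1/2 + (-(\<bar>l+m+1\<bar>+\<bar>l-m\<bar>)/2)) * ((1 + q^2) / (inverse q - q))" .
  show ?thesis unfolding eq
  proof (rule frac_bound[OF h N qden12[OF h l(1)]])
    show "0 < ((1 - q^2) / (inverse q - q))^2" by (rule zero_less_power[OF cpos[OF h]])
    show "0 \<le> (1 + q^2) / (inverse q - q)" using Q by simp
    have "\<bar>l+m+1\<bar> = l+m+1" "\<bar>l-m\<bar> = l-m" using l by auto
    then show "l + m \<le> m - 1/2 + (-(\<bar>l+m+1\<bar>+\<bar>l-m\<bar>)/2) - - (4*l+2)"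
      using l by (simp add: field_simps)
  qed
qed

lemma Mb1_bound:
  fixes q l m :: real
  assumes h: "0 < q" "q < 1" and l: "1/2 \<le> l" "-l \<le> m" "m \<le> l"
  shows "\<bar>- (q powr (m + 1)) * sqrt (qnum q (l+m+1) * qnum q (l-m+1)) / qnum q (2*l+2)\<bar>
         \<le> q powr (l+m) * (1 / (1 - q^2))"
proof -
  have Q: "0 < inverse q - q" using Qpos h by blast
  have "\<bar>- (q powr (m + 1)) * sqrt (qnum q (l+m+1) * qnum q (l-m+1))\<bar>
     \<le> q powr (m + 1) * (q powr (-(\<bar>l+m+1\<bar>+\<bar>l-m+1\<bar>)/2) / (inverse q - q))"
    unfolding abs_mult abs_minus_cancel
    apply (subst abs_of_nonneg[of "q powr _"], simp)
    by (rule mult_left_mono[OF sqrt_qq[OF h]]) simp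
  also have "\<dots> = q powr (m + 1 + (-(\<bar>l+m+1\<bar>+\<bar>l-m+1\<bar>)/2)) * (1 / (inverse q - q))"
    unfolding powr_add by simp
  finally have N: "\<bar>- (q powr (m + 1)) * sqrt (qnum q (l+m+1) * qnum q (l-m+1))\<bar>
     \<le> q powr (m + 1 + (-(\<bar>l+m+1\<bar>+\<bar>l-m+1\<bar>)/2)) * (1 / (inverse q - q))" .
  have "\<bar>- (q powr (m + 1)) * sqrt (qnum q (l+m+1) * qnum q (l-m+1)) / qnum q (2*l+2)\<bar>
     \<le> q powr (l+m) * ((1 / (inverse q - q)) / ((1 - q^2) / (inverse q - q)))"
  proof (rule frac_bound[OF h N qden2[OF h l(1)]])
    show "0 < (1 - q^2) / (inverse q - q)" using cpos[OF h] .
    show "0 \<le> 1 / (inverse q - q)" using Q by simp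
    have "\<bar>l+m+1\<bar> = l+m+1" "\<bar>l-m+1\<bar> = l-m+1" using l by auto
    then show "l + m \<le> m + 1 + (-(\<bar>l+m+1\<bar>+\<bar>l-m+1\<bar>)/2) - - (2*l+2)"
      using l by (simp add: field_simps)
  qed
  also have "\<dots> = q powr (l+m) * (1 / (1 - q^2))" using Q by simp
  finally show ?thesis .
qed

lemma Mb2_bound:
  fixes q l m :: real
  assumes h: "0 < q" "q < 1" and l: "1/2 \<le> l" "-l \<le> m" "m \<le> l"
  shows "\<bar>- (q powr (m + 1)) * sqrt (qnum q (l+m) * qnum q (l-m)) / qnum q (2*l)\<bar>
         \<le> q powr (l+m) * (1 / (1 - q^2))"
proof -
  have Q: "0 < inverse q - q" using Qpos h by blast
  have "\<bar>- (q powr (m + 1)) * sqrt (qnum q (l+m) * qnum q (l-m))\<bar>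
     \<le> q powr (m + 1) * (q powr (-(\<bar>l+m\<bar>+\<bar>l-m\<bar>)/2) / (inverse q - q))"
    unfolding abs_mult abs_minus_cancel
    apply (subst abs_of_nonneg[of "q powr _"], simp)
    by (rule mult_left_mono[OF sqrt_qq[OF h]]) simp
  also have "\<dots> = q powr (m + 1 + (-(\<bar>l+m\<bar>+\<bar>l-m\<bar>)/2)) * (1 / (inverse q - q))"
    unfolding powr_add by simp
  finally have N: "\<bar>- (q powr (m + 1)) * sqrt (qnum q (l+m) * qnum q (l-m))\<bar>
     \<le> q powr (m + 1 + (-(\<bar>l+m\<bar>+\<bar>l-m\<bar>)/2)) * (1 / (inverse q - q))" .
  have "\<bar>- (q powr (m + 1)) * sqrt (qnum q (l+m) * qnum q (l-m)) / qnum q (2*l)\<bar>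
     \<le> q powr (l+m) * ((1 / (inverse q - q)) / ((1 - q^2) / (inverse q - q)))"
  proof (rule frac_bound[OF h N qden1[OF h l(1)]])
    show "0 < (1 - q^2) / (inverse q - q)" using cpos[OF h] .
    show "0 \<le> 1 / (inverse q - q)" using Q by simp
    have "\<bar>l+m\<bar> = l+m" "\<bar>l-m\<bar> = l-m" using l by auto
    then show "l + m \<le> m + 1 + (-(\<bar>l+m\<bar>+\<bar>l-m\<bar>)/2) - - (2*l)"
      using l by (simp add: field_simps)
  qed
  also have "\<dots> = q powr (l+m) * (1 / (1 - q^2))" using Q by simp
  finally show ?thesis .
qed

lemma Mb3_bound:
  fixes q l m sg :: real
  assumes h: "0 < q" "q < 1" and l: "1/2 \<le> l" "-l \<le> m" "m \<le> l" and sg: "\<bar>sg\<bar> = 1"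
  shows "\<bar>sg * (qnum q (l-m+1) * qnum q (l+m) - q^2 * qnum q (l-m) * qnum q (l+m+1))
              / (qnum q (2*l) * qnum q (2*l+2))\<bar>
         \<le> q powr (l+m) * ((2 / (inverse q - q)^2) / ((1 - q^2) / (inverse q - q))^2)"
proof -
  have Q: "0 < inverse q - q" using Qpos h by blast
  have a1: "\<bar>l-m+1\<bar> + \<bar>l+m\<bar> = 2*l+1" "\<bar>l-m\<bar> + \<bar>l+m+1\<bar> = 2*l+1" using l by auto
  have q2: "q^2 \<le> 1" using h by (simp add: power_le_one)
  have b1: "\<bar>qnum q (l-m+1) * qnum q (l+m)\<bar> \<le> q powr (-(2*l+1)) * (1 / (inverse q - q)^2)"
    using qq_abs[OF h, of "l-m+1" "l+m"] a1 by simp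
  have b2: "\<bar>qnum q (l-m) * qnum q (l+m+1)\<bar> \<le> q powr (-(2*l+1)) * (1 / (inverse q - q)^2)"
    using qq_abs[OF h, of "l-m" "l+m+1"] a1 by simp
  have b3: "\<bar>q^2 * qnum q (l-m) * qnum q (l+m+1)\<bar> \<le> q powr (-(2*l+1)) * (1 / (inverse q - q)^2)"
  proof -
    have "\<bar>q^2 * qnum q (l-m) * qnum q (l+m+1)\<bar> = q^2 * \<bar>qnum q (l-m) * qnum q (l+m+1)\<bar>"
      by (simp add: abs_mult)
    also have "\<dots> \<le> 1 * \<bar>qnum q (l-m) * qnum q (l+m+1)\<bar>" by (rule mult_right_mono[OF q2]) simp
    finally show ?thesis using b2 by simp
  qed
  have N: "\<bar>sg * (qnum q (l-m+1) * qnum q (l+m) - q^2 * qnum q (l-m) * qnum q (l+m+1))\<bar>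
      \<le> q powr (-(2*l+1)) * (2 / (inverse q - q)^2)"
  proof -
    have "\<bar>sg * (qnum q (l-m+1) * qnum q (l+m) - q^2 * qnum q (l-m) * qnum q (l+m+1))\<bar>
       = \<bar>qnum q (l-m+1) * qnum q (l+m) - q^2 * qnum q (l-m) * qnum q (l+m+1)\<bar>"
      using sg by (simp add: abs_mult)
    also have "\<dots> \<le> \<bar>qnum q (l-m+1) * qnum q (l+m)\<bar> + \<bar>q^2 * qnum q (l-m) * qnum q (l+m+1)\<bar>"
      by (rule abs_triangle_ineq4)
    also have "\<dots> \<le> q powr (-(2*l+1)) * (1 / (inverse q - q)^2) + q powr (-(2*l+1)) * (1 / (inverse q - q)^2)"
      using b1 b3 by linarith
    finally show ?thesis by (simp add: field_simps)
  qed
  show ?thesis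
  proof (rule frac_bound[OF h N qden12[OF h l(1)]])
    show "0 < ((1 - q^2) / (inverse q - q))^2" by (rule zero_less_power[OF cpos[OF h]])
    show "0 \<le> 2 / (inverse q - q)^2" using Q by simp
    show "l + m \<le> -(2*l+1) - - (4*l+2)" using l by simp
  qed
qed

lemma sqrt_ge_self: "0 \<le> w \<Longrightarrow> w \<le> 1 \<Longrightarrow> w \<le> sqrt w"
proof -
  assume "0 \<le> w" "w \<le> 1"
  then have "sqrt w \<le> 1" by simp
  moreover have "w = sqrt w * sqrt w" using \<open>0 \<le> w\<close> by simp
  ultimately show ?thesis using \<open>0 \<le> w\<close> by (metis mult_left_mono mult.right_neutral real_sqrt_ge_zero)
qed

lemma Ma1_bound:
  fixes q l m :: real
  assumes h: "0 < q" "q < 1" and l: "1/2 \<le> l" "-l \<le> m" "m \<le> l"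
  shows "\<bar>q powr (m - l - 1/2) * sqrt (qnum q (l+m+1) * qnum q (l+m+2)) / qnum q (2*l+2) - 1\<bar>
         \<le> q powr (l+m) * (3 / (1 - q^2))"
proof -
  define P where "P = l + m"
  define Q where "Q = inverse q - q"
  define X where "X = 1 - q powr (2*(P+1))"
  define Y where "Y = 1 - q powr (2*(P+2))"
  define Z where "Z = 1 - q powr (2*(2*l+2))"
  have Q: "0 < Q" using Qpos h Q_def by blast
  have P0: "0 \<le> P" using l P_def by simp
  have e1: "qnum q (l+m+1) = q powr (-(P+1)) * X / Q" unfolding X_def Q_def P_def
    by (subst qnum_fact[OF h]) simp
  have e2: "qnum q (l+m+2) = q powr (-(P+2)) * Y / Q" unfolding Y_def Q_def P_def
    by (subst qnum_fact[OF h]) simp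
  have e3: "qnum q (2*l+2) = q powr (-(2*l+2)) * Z / Q" unfolding Z_def Q_def
    by (subst qnum_fact[OF h]) simp
  have qX: "q powr (2*(P+1)) \<le> q powr P" by (rule powr_mono') (use h P0 in auto)
  have qY: "q powr (2*(P+2)) \<le> q powr P" by (rule powr_mono') (use h P0 in auto)
  have qZ: "q powr (2*(2*l+2)) \<le> q powr P" by (rule powr_mono') (use h P0 l P_def in auto)
  have qZ2: "q powr (2*(2*l+2)) \<le> q powr 2" by (rule powr_mono') (use h l in auto)
  have q2: "q powr 2 = q^2" using h by (simp add: powr_numeral)
  have q21: "q^2 < 1" using h by (simp add: power_less_one_iff abs_square_less_1)
  have X01: "0 \<le> X" "X \<le> 1" unfolding X_def using h powr_le1[of "2*(P+1)" q] P0
    by auto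
  have Y01: "0 \<le> Y" "Y \<le> 1" unfolding Y_def using h powr_le1[of "2*(P+2)" q] P0
    by auto
  have Zlow: "1 - q^2 \<le> Z" unfolding Z_def using qZ2 q2 by simp
  have Z1: "Z \<le> 1" unfolding Z_def by simp
  have Zpos: "0 < Z" using Zlow q21 by simp
  have XY01: "0 \<le> X*Y" "X*Y \<le> 1" using X01 Y01 by (auto simp: mult_le_one)
  have prod: "qnum q (l+m+1) * qnum q (l+m+2) = (q powr (-(2*P+3)/2) / Q)^2 * (X*Y)"
  proof -
    have "(q powr (-(2*P+3)/2))^2 = q powr (-(P+1)) * q powr (-(P+2))"
      unfolding power2_eq_square powr_add[symmetric] by (rule arg_cong[where f="(powr) q"]) (simp add: field_simps)
    then show ?thesis unfolding e1 e2 by (simp add: power_divide power2_eq_square)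
  qed
  have sq: "sqrt (qnum q (l+m+1) * qnum q (l+m+2)) = q powr (-(2*P+3)/2) / Q * sqrt (X*Y)"
    unfolding prod real_sqrt_mult using Q by simp
  have v: "q powr (m - l - 1/2) * sqrt (qnum q (l+m+1) * qnum q (l+m+2)) / qnum q (2*l+2) = sqrt (X*Y) / Z"
  proof -
    have ex: "q powr (m - l - 1/2) * q powr (-(2*P+3)/2) = q powr (-(2*l+2))"
      unfolding powr_add[symmetric] P_def by (rule arg_cong[where f="(powr) q"]) (simp add: field_simps)
    have "q powr (m - l - 1/2) * sqrt (qnum q (l+m+1) * qnum q (l+m+2)) / qnum q (2*l+2)
        = (q powr (m - l - 1/2) * q powr (-(2*P+3)/2)) * sqrt (X*Y) / (q powr (-(2*l+2)) * Z)"
    proof -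
      have qq: "q \<noteq> 0" "Q \<noteq> 0" "Z \<noteq> 0" using h Q Zpos by auto
      show ?thesis unfolding sq e3 using qq by (simp add: divide_simps)
    qed
    also have "\<dots> = sqrt (X*Y) / Z" unfolding ex using Zpos h by simp
    finally show ?thesis .
  qed
  have s1: "X*Y \<le> sqrt (X*Y)" "sqrt (X*Y) \<le> 1" using sqrt_ge_self XY01 by auto
  have s2: "1 - X*Y \<le> (1 - X) + (1 - Y)"
  proof -
    have "1 - X*Y = (1 - X) + X*(1-Y)" by (simp add: algebra_simps)
    moreover have "X*(1-Y) \<le> 1 - Y" using X01 Y01 by (simp add: mult_left_le_one_le)
    ultimately show ?thesis by linarith
  qed
  have "\<bar>sqrt (X*Y) - Z\<bar> \<le> 3 * q powr P"
  proof -
    have "1 - X \<le> q powr P" "1 - Y \<le> q powr P" "1 - Z \<le> q powr P"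
      using qX qY qZ unfolding X_def Y_def Z_def by auto
    moreover have "0 \<le> q powr P" by simp
    ultimately show ?thesis using s1 s2 Z1 unfolding abs_le_iff by linarith
  qed
  then have "\<bar>sqrt (X*Y) / Z - 1\<bar> \<le> 3 * q powr P / Z"
  proof -
    have "sqrt (X*Y) / Z - 1 = (sqrt (X*Y) - Z) / Z" using Zpos by (simp add: field_simps)
    then show ?thesis using Zpos \<open>\<bar>sqrt (X*Y) - Z\<bar> \<le> 3 * q powr P\<close>
      by (simp add: abs_div divide_right_mono)
  qed
  also have "\<dots> \<le> 3 * q powr P / (1 - q^2)"
    using Zlow q21 by (intro divide_left_mono) auto
  also have "\<dots> = q powr P * (3 / (1 - q^2))" by (metis mult.commute times_divide_eq_right)
  finally show ?thesis unfolding v P_def .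
qed



lemma bound_mono: "\<bar>a::real\<bar> \<le> p * c \<Longrightarrow> c \<le> K \<Longrightarrow> 0 \<le> p \<Longrightarrow> \<bar>a\<bar> \<le> K * p"
  by (metis mult.commute mult_left_mono order_trans)

definition fa1 :: "real \<Rightarrow> real \<Rightarrow> real \<Rightarrow> real" where
  "fa1 q l m = q powr (m - l - 1/2) * sqrt (qnum q (l+m+1) * qnum q (l+m+2)) / qnum q (2*l+2)"
definition fa2 :: "real \<Rightarrow> real \<Rightarrow> real \<Rightarrow> real" where
  "fa2 q l m = - (q powr (m + l + 1/2)) * sqrt (qnum q (l-m-1) * qnum q (l-m)) / qnum q (2*l)"
definition fa3 :: "real \<Rightarrow> real \<Rightarrow> real \<Rightarrow> real \<Rightarrow> real" where
  "fa3 q l m sg = sg * (1 + q^2) * q powr (m - 1/2) / (qnum q (2*l) * qnum q (2*l+2))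
              * sqrt (qnum q (l+m+1) * qnum q (l-m))"
definition fb1 :: "real \<Rightarrow> real \<Rightarrow> real \<Rightarrow> real" where
  "fb1 q l m = - (q powr (m + 1)) * sqrt (qnum q (l+m+1) * qnum q (l-m+1)) / qnum q (2*l+2)"
definition fb2 :: "real \<Rightarrow> real \<Rightarrow> real \<Rightarrow> real" where
  "fb2 q l m = - (q powr (m + 1)) * sqrt (qnum q (l+m) * qnum q (l-m)) / qnum q (2*l)"
definition fb3 :: "real \<Rightarrow> real \<Rightarrow> real \<Rightarrow> real \<Rightarrow> real" where
  "fb3 q l m sg = sg * (qnum q (l-m+1) * qnum q (l+m) - q^2 * qnum q (l-m) * qnum q (l+m+1))
              / (qnum q (2*l) * qnum q (2*l+2))"

lemma Ma_eq: "Ma q (s',n',k') (s,n,k) =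
  (if valid (s',n',k') \<and> valid (s,n,k) \<and> s' = s \<and> k' = k + 1 then
     (if n' = n + 1 then fa1 q (real n + 1/2) (real_of_int k + 1/2)
      else if n' + 1 = n then fa2 q (real n + 1/2) (real_of_int k + 1/2)
      else if n' = n then fa3 q (real n + 1/2) (real_of_int k + 1/2) (if s then 1 else -1)
      else 0)
   else 0)"
  unfolding Ma_def fa1_def fa2_def fa3_def Let_def prod.case ..

lemma Mb_eq: "Mb q (s',n',k') (s,n,k) =
  (if valid (s',n',k') \<and> valid (s,n,k) \<and> s' = s \<and> k' = k then
     (if n' = n + 1 then fb1 q (real n + 1/2) (real_of_int k + 1/2)
      else if n' + 1 = n then fb2 q (real n + 1/2) (real_of_int k + 1/2)
      else if n' = n then fb3 q (real n + 1/2) (real_of_int k + 1/2) (if s then 1 else -1)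
      else 0)
   else 0)"
  unfolding Mb_def fb1_def fb2_def fb3_def Let_def prod.case ..

definition pd :: "idx \<Rightarrow> real" where
  "pd j = (case j of (s, n, k) \<Rightarrow> real n + real_of_int k + 1)"

definition shiftg :: "gen \<Rightarrow> idx \<Rightarrow> idx option" where
  "shiftg g j = (case j of (s, n, k) \<Rightarrow> (case g of
      GA \<Rightarrow> if valid j then Some (s, n+1, k+1) else None
    | GAs \<Rightarrow> if valid j \<and> 1 \<le> n \<and> valid (s, n-1, k-1) then Some (s, n-1, k-1) else None
    | GB \<Rightarrow> None))"

definition Kq :: "real \<Rightarrow> real" where
  "Kq q = 3 / (1 - q^2) + 1 / (1 - q^2)
     + ((1 + q^2) / (inverse q - q)) / ((1 - q^2) / (inverse q - q))^2
     + (2 / (inverse q - q)^2) / ((1 - q^2) / (inverse q - q))^2"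

lemma Kq_facts:
  assumes h: "0 < (q::real)" "q < 1"
  shows "0 \<le> Kq q" "3 / (1 - q^2) \<le> Kq q" "1 / (1 - q^2) \<le> Kq q"
    "((1 + q^2) / (inverse q - q)) / ((1 - q^2) / (inverse q - q))^2 \<le> Kq q"
    "(2 / (inverse q - q)^2) / ((1 - q^2) / (inverse q - q))^2 \<le> Kq q"
proof -
  have Q: "0 < inverse q - q" using Qpos h by blast
  have q21: "q^2 < 1" using h by (simp add: power_less_one_iff abs_square_less_1)
  have a: "0 \<le> 3 / (1 - q^2)" "0 \<le> 1 / (1 - q^2)" using q21 by auto
  have b: "0 \<le> ((1 + q^2) / (inverse q - q)) / ((1 - q^2) / (inverse q - q))^2" using Q by simp
  have c: "0 \<le> (2 / (inverse q - q)^2) / ((1 - q^2) / (inverse q - q))^2" using Q by simp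
  show "0 \<le> Kq q" "3 / (1 - q^2) \<le> Kq q" "1 / (1 - q^2) \<le> Kq q"
    "((1 + q^2) / (inverse q - q)) / ((1 - q^2) / (inverse q - q))^2 \<le> Kq q"
    "(2 / (inverse q - q)^2) / ((1 - q^2) / (inverse q - q))^2 \<le> Kq q"
    unfolding Kq_def using a b c by linarith+
qed

lemma valid_lm:
  assumes "valid (s,n,k)"
  shows "1/2 \<le> real n + 1/2" "-(real n + 1/2) \<le> real_of_int k + 1/2" "real_of_int k + 1/2 \<le> real n + 1/2"
proof -
  have "- int n - 1 \<le> k" "k \<le> int n" using assms by (auto simp: valid_def)
  then have "real_of_int (- int n - 1) \<le> real_of_int k" "real_of_int k \<le> real_of_int (int n)"
    by (simp_all only: of_int_le_iff)
  then have "- real n - 1 \<le> real_of_int k" "real_of_int k \<le> real n" by simp_all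
  then show "1/2 \<le> real n + 1/2" "-(real n + 1/2) \<le> real_of_int k + 1/2" "real_of_int k + 1/2 \<le> real n + 1/2"
    by auto
qed

lemma pd_eq: "pd (s,n,k) = (real n + 1/2) + (real_of_int k + 1/2)"
  by (simp add: pd_def)


lemma Ma_bound:
  assumes h: "0 < q" "q < 1"
  shows "\<bar>Ma q i j - (if shiftg GA j = Some i then 1 else 0)\<bar> \<le> Kq q * q powr pd j"
proof -
  obtain s' n' k' where i: "i = (s',n',k')" by (cases i) auto
  obtain s n k where j: "j = (s,n,k)" by (cases j) auto
  define l where "l = real n + 1/2"
  define m where "m = real_of_int k + 1/2"
  note K = Kq_facts[OF h]
  have qp: "0 \<le> q powr pd j" by simp
  show ?thesis
  proof (cases "valid (s',n',k') \<and> valid (s,n,k) \<and> s' = s \<and> k' = k + 1")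
    case False
    have "Ma q i j = 0" unfolding i j Ma_eq by (rule if_not_P[OF False])
    moreover have "shiftg GA j \<noteq> Some i" using False unfolding i j shiftg_def
      by (auto simp: valid_def)
    ultimately show ?thesis using K(1) qp by simp
  next
    case True
    then have vj: "valid (s,n,k)" by simp
    have lm: "1/2 \<le> l" "-l \<le> m" "m \<le> l" using valid_lm[OF vj] unfolding l_def m_def by auto
    have pdj: "pd j = l + m" unfolding j pd_eq l_def m_def ..
    have sg: "\<bar>(if s then 1 else -1::real)\<bar> = 1" by simp
    consider "n' = n + 1" | "n' + 1 = n" | "n' = n" | "n' \<noteq> n + 1 \<and> n' + 1 \<noteq> n \<and> n' \<noteq> n" by blast
    then show ?thesis
    proof cases
      case 1
      then have "Ma q i j = fa1 q l m" unfolding i j Ma_eq l_def m_def using True by auto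
      moreover have "shiftg GA j = Some i" unfolding i j shiftg_def using True 1 by simp
      moreover have "\<bar>fa1 q l m - 1\<bar> \<le> Kq q * q powr (l+m)"
        by (rule bound_mono[OF _ K(2)]) (unfold fa1_def, rule Ma1_bound[OF h lm], simp)
      ultimately show ?thesis unfolding pdj by simp
    next
      case 2
      then have "Ma q i j = fa2 q l m" unfolding i j Ma_eq l_def m_def using True by auto
      moreover have "shiftg GA j \<noteq> Some i" unfolding i j shiftg_def using True 2 by auto
      moreover have "\<bar>fa2 q l m\<bar> \<le> Kq q * q powr (l+m)"
        by (rule bound_mono[OF _ K(3)]) (unfold fa2_def, rule Ma2_bound[OF h lm], simp)
      ultimately show ?thesis unfolding pdj by simp
    next
      case 3
      then have "Ma q i j = fa3 q l m (if s then 1 else -1)" unfolding i j Ma_eq l_def m_def using True by auto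
      moreover have "shiftg GA j \<noteq> Some i" unfolding i j shiftg_def using True 3 by auto
      moreover have "\<bar>fa3 q l m (if s then 1 else -1)\<bar> \<le> Kq q * q powr (l+m)"
        by (rule bound_mono[OF _ K(4)]) (unfold fa3_def, rule Ma3_bound[OF h lm sg], simp)
      ultimately show ?thesis unfolding pdj by simp
    next
      case 4
      then have "Ma q i j = 0" unfolding i j Ma_eq using True by simp
      moreover have "shiftg GA j \<noteq> Some i" unfolding i j shiftg_def using True 4 by auto
      ultimately show ?thesis using K(1) qp by simp
    qed
  qed
qed

lemma Mb_bound:
  assumes h: "0 < q" "q < 1"
  shows "\<bar>Mb q i j\<bar> \<le> Kq q * q powr pd j"
proof -
  obtain s' n' k' where i: "i = (s',n',k')" by (cases i) auto
  obtain s n k where j: "j = (s,n,k)" by (cases j) auto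
  define l where "l = real n + 1/2"
  define m where "m = real_of_int k + 1/2"
  note K = Kq_facts[OF h]
  have qp: "0 \<le> q powr pd j" by simp
  show ?thesis
  proof (cases "valid (s',n',k') \<and> valid (s,n,k) \<and> s' = s \<and> k' = k")
    case False
    have "Mb q i j = 0" unfolding i j Mb_eq by (rule if_not_P[OF False])
    then show ?thesis using K(1) qp by simp
  next
    case True
    then have vj: "valid (s,n,k)" by simp
    have lm: "1/2 \<le> l" "-l \<le> m" "m \<le> l" using valid_lm[OF vj] unfolding l_def m_def by auto
    have pdj: "pd j = l + m" unfolding j pd_eq l_def m_def ..
    have sg: "\<bar>(if s then 1 else -1::real)\<bar> = 1" by simp
    consider "n' = n + 1" | "n' + 1 = n" | "n' = n" | "n' \<noteq> n + 1 \<and> n' + 1 \<noteq> n \<and> n' \<noteq> n" by blast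
    then show ?thesis
    proof cases
      case 1
      then have "Mb q i j = fb1 q l m" unfolding i j Mb_eq l_def m_def using True by auto
      moreover have "\<bar>fb1 q l m\<bar> \<le> Kq q * q powr (l+m)"
        by (rule bound_mono[OF _ K(3)]) (unfold fb1_def, rule Mb1_bound[OF h lm], simp)
      ultimately show ?thesis unfolding pdj by simp
    next
      case 2
      then have "Mb q i j = fb2 q l m" unfolding i j Mb_eq l_def m_def using True by auto
      moreover have "\<bar>fb2 q l m\<bar> \<le> Kq q * q powr (l+m)"
        by (rule bound_mono[OF _ K(3)]) (unfold fb2_def, rule Mb2_bound[OF h lm], simp)
      ultimately show ?thesis unfolding pdj by simp
    next
      case 3
      then have "Mb q i j = fb3 q l m (if s then 1 else -1)" unfolding i j Mb_eq l_def m_def using True by auto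
      moreover have "\<bar>fb3 q l m (if s then 1 else -1)\<bar> \<le> Kq q * q powr (l+m)"
        by (rule bound_mono[OF _ K(5)]) (unfold fb3_def, rule Mb3_bound[OF h lm sg], simp)
      ultimately show ?thesis unfolding pdj by simp
    next
      case 4
      then have "Mb q i j = 0" unfolding i j Mb_eq using True by simp
      then show ?thesis using K(1) qp by simp
    qed
  qed
qed



lemma Ma_nz: "Ma q (s',n',k') (s,n,k) \<noteq> 0 \<Longrightarrow>
   valid (s',n',k') \<and> valid (s,n,k) \<and> s' = s \<and> k' = k + 1 \<and> (n' = n + 1 \<or> n' + 1 = n \<or> n' = n)"
  unfolding Ma_eq by (auto split: if_splits)

lemma Mb_nz: "Mb q (s',n',k') (s,n,k) \<noteq> 0 \<Longrightarrow>
   valid (s',n',k') \<and> valid (s,n,k) \<and> s' = s \<and> k' = k \<and> (n' = n + 1 \<or> n' + 1 = n \<or> n' = n)"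
  unfolding Mb_eq by (auto split: if_splits)

lemma shiftGA: "shiftg GA (s,n,k) = Some i \<longleftrightarrow> valid (s,n,k) \<and> i = (s, n+1, k+1)"
  unfolding shiftg_def by auto

lemma shiftGAs: "shiftg GAs (s,n,k) = Some i \<longleftrightarrow> valid (s,n,k) \<and> 1 \<le> n \<and> valid (s, n-1, k-1) \<and> i = (s, n-1, k-1)"
  unfolding shiftg_def by auto

lemma shiftGB: "shiftg GB j = None"
  unfolding shiftg_def by (cases j) auto

lemma shift_adj: "shiftg GAs j = Some i \<longleftrightarrow> shiftg GA i = Some j"
proof -
  obtain s n k where j: "j = (s,n,k)" by (cases j) auto
  obtain s' n' k' where i: "i = (s',n',k')" by (cases i) auto
  show ?thesis unfolding i j shiftGA shiftGAs
    by (cases n) (auto simp: valid_def)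
qed

lemma shift_pd: "shiftg g j = Some j' \<Longrightarrow> pd j - 2 \<le> pd j'"
proof -
  assume a: "shiftg g j = Some j'"
  obtain s n k where j: "j = (s,n,k)" by (cases j) auto
  show ?thesis
  proof (cases g)
    case GA
    then have "shiftg GA (s,n,k) = Some j'" using a j by simp
    then have "j' = (s, n+1, k+1)" by (simp add: shiftGA)
    then show ?thesis by (simp add: pd_def j)
  next
    case GAs
    then have "shiftg GAs (s,n,k) = Some j'" using a j by simp
    then have "j' = (s, n-1, k-1)" "1 \<le> n" by (simp_all add: shiftGAs)
    then show ?thesis by (simp add: pd_def j of_nat_diff)
  next
    case GB then show ?thesis using a shiftGB by simp
  qed
qed

lemma valid_pd: "valid j \<Longrightarrow> 0 \<le> pd j"
proof -
  assume "valid j"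
  obtain s n k where j: "j = (s,n,k)" by (cases j) auto
  have "- int n - 1 \<le> k" using \<open>valid j\<close> j by (auto simp: valid_def)
  then have "real_of_int (- int n - 1) \<le> real_of_int k" by (simp only: of_int_le_iff)
  then show ?thesis unfolding j pd_def by simp
qed

definition Cg :: "real \<Rightarrow> real" where "Cg q = Kq q / q^2"

lemma Cg_facts: assumes h: "0 < (q::real)" "q < 1" shows "0 \<le> Cg q" "Kq q \<le> Cg q"
proof -
  have K: "0 \<le> Kq q" using Kq_facts[OF h] by simp
  have q2: "0 < q^2" "q^2 \<le> 1" using h by (auto simp: power_le_one)
  show "0 \<le> Cg q" unfolding Cg_def using K q2 by simp
  have "Kq q * q^2 \<le> Kq q * 1" using K q2 by (intro mult_left_mono) auto
  then show "Kq q \<le> Cg q" unfolding Cg_def using q2 by (simp add: le_divide_eq)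
qed

lemma Ma_pd: "Ma q j i \<noteq> 0 \<Longrightarrow> pd j \<le> pd i + 2"
proof -
  assume a: "Ma q j i \<noteq> 0"
  obtain s n k where j: "j = (s,n,k)" by (cases j) auto
  obtain s' n' k' where i: "i = (s',n',k')" by (cases i) auto
  show ?thesis using Ma_nz[OF a[unfolded i j]] unfolding i j pd_def by auto
qed

lemma gen_bound:
  assumes h: "0 < q" "q < 1"
  shows "\<bar>Mgen q g i j - (if shiftg g j = Some i then 1 else 0)\<bar> \<le> Cg q * q powr pd j"
proof (cases g)
  case GA
  have "\<bar>Ma q i j - (if shiftg GA j = Some i then 1 else 0)\<bar> \<le> Kq q * q powr pd j" by (rule Ma_bound[OF h])
  also have "\<dots> \<le> Cg q * q powr pd j" using Cg_facts[OF h] by (intro mult_right_mono) auto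
  finally show ?thesis using GA by (simp add: Mgen_def)
next
  case GB
  have "\<bar>Mb q i j\<bar> \<le> Kq q * q powr pd j" by (rule Mb_bound[OF h])
  also have "\<dots> \<le> Cg q * q powr pd j" using Cg_facts[OF h] by (intro mult_right_mono) auto
  finally show ?thesis using GB by (simp add: Mgen_def shiftGB)
next
  case GAs
  have b: "\<bar>Ma q j i - (if shiftg GA i = Some j then 1 else 0)\<bar> \<le> Kq q * q powr pd i" by (rule Ma_bound[OF h])
  show ?thesis
  proof (cases "Ma q j i = 0 \<and> shiftg GA i \<noteq> Some j")
    case True
    then show ?thesis using GAs Cg_facts[OF h] by (simp add: Mgen_def shift_adj)
  next
    case False
    have pdr: "pd j \<le> pd i + 2"
    proof (cases "Ma q j i = 0")
      case True
      then have "shiftg GA i = Some j" using False by simp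
      then show ?thesis using shift_adj[of j i] shift_pd[of GAs j i] by simp
    next
      case False
      then show ?thesis by (rule Ma_pd)
    qed
    have "q powr pd i \<le> q powr (pd j - 2)" using h pdr by (intro powr_mono') auto
    also have "\<dots> = q powr pd j / q^2" using h by (simp add: powr_diff powr_numeral)
    finally have "Kq q * q powr pd i \<le> Kq q * (q powr pd j / q^2)"
      using Kq_facts[OF h] by (intro mult_left_mono) auto
    also have "\<dots> = Cg q * q powr pd j" unfolding Cg_def by simp
    finally show ?thesis using b GAs by (simp add: Mgen_def shift_adj)
  qed
qed

lemma Mgen_valid: "Mgen q g i j \<noteq> 0 \<Longrightarrow> valid j"
proof -
  assume a: "Mgen q g i j \<noteq> 0"
  obtain s n k where j: "j = (s,n,k)" by (cases j) auto
  obtain s' n' k' where i: "i = (s',n',k')" by (cases i) auto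
  show ?thesis using a unfolding i j Mgen_def
    by (cases g) (auto dest: Ma_nz Mb_nz)
qed

lemma Mgen_bounded:
  assumes h: "0 < q" "q < 1"
  shows "\<bar>Mgen q g i j\<bar> \<le> 1 + Cg q"
proof (cases "Mgen q g i j = 0")
  case True then show ?thesis using Cg_facts[OF h] by simp
next
  case False
  then have "0 \<le> pd j" using Mgen_valid valid_pd by blast
  then have "q powr pd j \<le> 1" using h by (intro powr_le1) auto
  then have "Cg q * q powr pd j \<le> Cg q" using Cg_facts[OF h] by (simp add: mult_left_le)
  moreover have "\<bar>Mgen q g i j - (if shiftg g j = Some i then 1 else 0)\<bar> \<le> Cg q * q powr pd j"
    by (rule gen_bound[OF h])
  ultimately show ?thesis by (auto split: if_splits simp: abs_le_iff)
qed

lemma Mgen_nbr: "Mgen q g i j \<noteq> 0 \<Longrightarrow> j \<in> nbr i"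
proof -
  assume a: "Mgen q g i j \<noteq> 0"
  obtain s n k where j: "j = (s,n,k)" by (cases j) auto
  obtain s' n' k' where i: "i = (s',n',k')" by (cases i) auto
  show ?thesis
  proof (cases g)
    case GA then show ?thesis using Ma_nz[of q s' n' k' s n k] a unfolding i j Mgen_def nbr_def by auto
  next
    case GAs then show ?thesis using Ma_nz[of q s n k s' n' k'] a unfolding i j Mgen_def nbr_def by auto
  next
    case GB then show ?thesis using Mb_nz[of q s' n' k' s n k] a unfolding i j Mgen_def nbr_def by auto
  qed
qed

lemma nbr_sub: "nbr (s,n,k) \<subseteq> (\<lambda>(a,b). (s,a,b)) ` ({n-1..n+1} \<times> {k-1..k+1})"
  unfolding nbr_def by (auto simp: image_iff)

lemma nbr_finite: "finite (nbr i)"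
proof -
  obtain s n k where i: "i = (s,n,k)" by (cases i) auto
  show ?thesis unfolding i by (rule finite_subset[OF nbr_sub]) auto
qed

lemma nbr_card: "card (nbr i) \<le> 9"
proof -
  obtain s n k where i: "i = (s,n,k)" by (cases i) auto
  have "card (nbr (s,n,k)) \<le> card ((\<lambda>(a,b). (s,a,b)) ` ({n-1..n+1} \<times> {k-1..k+1}))"
    by (rule card_mono[OF _ nbr_sub]) auto
  also have "\<dots> \<le> card ({n-1..n+1} \<times> {k-1..k+1})" by (rule card_image_le) auto
  also have "\<dots> = card {n-1..n+1} * card {k-1..k+1}" by (rule card_cartesian_product)
  also have "\<dots> \<le> 3 * 3"
  proof (rule mult_mono)
    show "card {n-1..n+1} \<le> 3" by simp
    show "card {k-1..k+1} \<le> 3" by simp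
  qed auto
  finally show ?thesis unfolding i by simp
qed

lemma apply_gen_basis: "apply_gen q g (basis j) i = complex_of_real (Mgen q g i j)"
proof -
  have "apply_gen q g (basis j) i = (\<Sum>j'\<in>nbr i. if j' = j then complex_of_real (Mgen q g i j) else 0)"
    unfolding apply_gen_def basis_def by (intro sum.cong) auto
  also have "\<dots> = (if j \<in> nbr i then complex_of_real (Mgen q g i j) else 0)"
    using nbr_finite by (simp add: sum.delta)
  also have "\<dots> = complex_of_real (Mgen q g i j)" using Mgen_nbr[of q g i j] by auto
  finally show ?thesis .
qed

lemma apply_gen_add: "apply_gen q g (\<lambda>i. u i + v i) i = apply_gen q g u i + apply_gen q g v i"
  unfolding apply_gen_def by (simp add: distrib_left sum.distrib)

lemma apply_gen_zero: "apply_gen q g (\<lambda>_. 0) i = 0"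
  unfolding apply_gen_def by simp

lemma apply_gen_bound:
  assumes h: "0 < q" "q < 1" and e: "\<And>j. cmod (v j) \<le> E"
  shows "cmod (apply_gen q g v i) \<le> 9 * (1 + Cg q) * E"
proof -
  have E0: "0 \<le> E" using e[of i] norm_ge_zero order_trans by blast
  have "cmod (apply_gen q g v i) \<le> (\<Sum>j\<in>nbr i. cmod (complex_of_real (Mgen q g i j) * v j))"
    unfolding apply_gen_def by (rule norm_sum)
  also have "\<dots> \<le> (\<Sum>j\<in>nbr i. (1 + Cg q) * E)"
  proof (rule sum_mono)
    fix j assume "j \<in> nbr i"
    have "cmod (complex_of_real (Mgen q g i j) * v j) = \<bar>Mgen q g i j\<bar> * cmod (v j)"
      by (simp add: norm_mult)
    also have "\<dots> \<le> (1 + Cg q) * E"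
      using Mgen_bounded[OF h] e Cg_facts[OF h] by (intro mult_mono) auto
    finally show "cmod (complex_of_real (Mgen q g i j) * v j) \<le> (1 + Cg q) * E" .
  qed
  also have "\<dots> = real (card (nbr i)) * ((1 + Cg q) * E)" by simp
  also have "\<dots> \<le> 9 * ((1 + Cg q) * E)"
    using nbr_card[of i] Cg_facts[OF h] E0 by (intro mult_right_mono) auto
  also have "\<dots> = 9 * (1 + Cg q) * E" by (simp only: mult.assoc)
  finally show ?thesis .
qed



fun Ew :: "gen list \<Rightarrow> idx \<Rightarrow> idx option" where
  "Ew [] j = Some j"
| "Ew (g#w) j = (case Ew w j of None \<Rightarrow> None | Some j' \<Rightarrow> shiftg g j')"

definition idl :: "gen list \<Rightarrow> idx \<Rightarrow> idx \<Rightarrow> complex" where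
  "idl w j = (case Ew w j of None \<Rightarrow> (\<lambda>_. 0) | Some j' \<Rightarrow> basis j')"

lemma Ew_pd: "Ew w j = Some j' \<Longrightarrow> pd j - 2 * real (length w) \<le> pd j'"
proof (induction w arbitrary: j')
  case Nil then show ?case by simp
next
  case (Cons g w)
  then obtain j'' where a: "Ew w j = Some j''" "shiftg g j'' = Some j'"
    by (cases "Ew w j") auto
  have "pd j - 2 * real (length w) \<le> pd j''" using Cons.IH[OF a(1)] .
  moreover have "pd j'' - 2 \<le> pd j'" using shift_pd[OF a(2)] .
  ultimately show ?case by simp
qed

lemma apply_word_Cons: "apply_word q (g#w) v = apply_gen q g (apply_word q w v)"
  by (simp add: apply_word_def)

lemma apply_word_Nil: "apply_word q [] v = v"
  by (simp add: apply_word_def)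

lemma word_approx:
  assumes h: "0 < q" "q < 1"
  shows "\<exists>C\<ge>0. \<forall>j i. cmod (apply_word q w (basis j) i - idl w j i) \<le> C * q powr pd j"
proof (induction w)
  case Nil
  show ?case by (rule exI[of _ 0]) (simp add: apply_word_Nil idl_def)
next
  case (Cons g w)
  from Cons.IH obtain C where C: "0 \<le> C" "\<And>j i. cmod (apply_word q w (basis j) i - idl w j i) \<le> C * q powr pd j"
    by blast
  define L where "L = real (length w)"
  define C' where "C' = Cg q * q powr (-2*L) + 9 * (1 + Cg q) * C"
  have C'0: "0 \<le> C'" unfolding C'_def using C Cg_facts[OF h] by simp
  have "cmod (apply_word q (g#w) (basis j) i - idl (g#w) j i) \<le> C' * q powr pd j" for j i
  proof -
    define v where "v = apply_word q w (basis j)"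
    define u where "u = idl w j"
    define e where "e = (\<lambda>i. v i - u i)"
    have ve: "v = (\<lambda>i. u i + e i)" unfolding e_def by simp
    have eb: "\<And>i. cmod (e i) \<le> C * q powr pd j" unfolding e_def v_def u_def using C(2) by blast
    have ae: "cmod (apply_gen q g e i) \<le> 9 * (1 + Cg q) * (C * q powr pd j)"
      by (rule apply_gen_bound[OF h eb])
    have split: "apply_word q (g#w) (basis j) i = apply_gen q g u i + apply_gen q g e i"
      unfolding apply_word_Cons v_def[symmetric] ve by (rule apply_gen_add)
    show ?thesis
    proof (cases "Ew w j")
      case None
      then have "u = (\<lambda>_. 0)" unfolding u_def idl_def by simp
      moreover have "idl (g#w) j i = 0" using None by (simp add: idl_def)
      ultimately have "cmod (apply_word q (g#w) (basis j) i - idl (g#w) j i) = cmod (apply_gen q g e i)"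
        unfolding split by (simp add: apply_gen_zero)
      also have "\<dots> \<le> 9 * (1 + Cg q) * (C * q powr pd j)" by (rule ae)
      also have "\<dots> \<le> C' * q powr pd j" unfolding C'_def using Cg_facts[OF h]
        by (simp add: algebra_simps)
      finally show ?thesis .
    next
      case (Some j'')
      then have "u = basis j''" unfolding u_def idl_def by simp
      then have ag: "apply_gen q g u i = complex_of_real (Mgen q g i j'')" by (simp add: apply_gen_basis)
      have id: "idl (g#w) j i = complex_of_real (if shiftg g j'' = Some i then 1 else 0)"
        using Some by (cases "shiftg g j''") (auto simp: idl_def basis_def)
      have "cmod (apply_word q (g#w) (basis j) i - idl (g#w) j i)
          = cmod (complex_of_real (Mgen q g i j'' - (if shiftg g j'' = Some i then 1 else 0)) + apply_gen q g e i)"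
        unfolding split ag id by (simp add: algebra_simps)
      also have "\<dots> \<le> \<bar>Mgen q g i j'' - (if shiftg g j'' = Some i then 1 else 0)\<bar> + cmod (apply_gen q g e i)"
        by (metis norm_of_real norm_triangle_ineq)
      also have "\<dots> \<le> Cg q * q powr pd j'' + 9 * (1 + Cg q) * (C * q powr pd j)"
        using gen_bound[OF h] ae by (intro add_mono) auto
      also have "Cg q * q powr pd j'' \<le> Cg q * (q powr (-2*L) * q powr pd j)"
      proof -
        have "pd j - 2 * L \<le> pd j''" using Ew_pd[OF Some] unfolding L_def .
        then have "q powr pd j'' \<le> q powr (pd j - 2 * L)" using h by (intro powr_mono') auto
        also have "\<dots> = q powr (-2*L) * q powr pd j" by (simp add: powr_add[symmetric])
        finally show ?thesis using Cg_facts[OF h] by (intro mult_left_mono) auto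
      qed
      finally show ?thesis unfolding C'_def by (simp add: algebra_simps)
    qed
  qed
  then show ?case using C'0 by blast
qed

fun gd :: "gen \<Rightarrow> int" where
  "gd GA = 1" | "gd GAs = -1" | "gd GB = 0"

definition dw :: "gen list \<Rightarrow> int" where "dw w = sum_list (map gd w)"

definition cw :: "gen list \<Rightarrow> complex" where
  "cw w = (if GB \<notin> set w \<and> dw w = 0 then 1 else 0)"

lemma dw_Cons: "dw (g#w) = gd g + dw w" by (simp add: dw_def)

lemma dw_abs: "\<bar>dw w\<bar> \<le> int (length w)"
proof (induction w)
  case Nil then show ?case by (simp add: dw_def)
next
  case (Cons g w)
  have "\<bar>gd g\<bar> \<le> 1" by (cases g) auto
  then show ?case using Cons by (simp add: dw_Cons)
qed

lemma Ew_GB: "GB \<in> set w \<Longrightarrow> Ew w j = None"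
proof (induction w)
  case Nil then show ?case by simp
next
  case (Cons g w)
  show ?case
  proof (cases "g = GB")
    case True then show ?thesis by (cases "Ew w j") (auto simp: shiftGB)
  next
    case False then show ?thesis using Cons by simp
  qed
qed

lemma Ew_large:
  assumes v: "valid (s,n,k)"
  shows "GB \<notin> set w \<Longrightarrow> 2 * real (length w) \<le> pd (s,n,k) \<Longrightarrow>
     \<exists>n'. Ew w (s,n,k) = Some (s, n', k + dw w) \<and> int n' = int n + dw w \<and> valid (s, n', k + dw w)"
proof (induction w)
  case Nil then show ?case using v by (simp add: dw_def)
next
  case (Cons g w)
  have gb: "GB \<notin> set w" "g \<noteq> GB" using Cons.prems by auto
  have len: "2 * real (length w) \<le> pd (s,n,k)" using Cons.prems by simp
  obtain n' where n': "Ew w (s,n,k) = Some (s, n', k + dw w)" "int n' = int n + dw w" "valid (s, n', k + dw w)"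
    using Cons.IH[OF gb(1) len] by blast
  define k' where "k' = k + dw w"
  have da: "\<bar>dw w\<bar> \<le> int (length w)" by (rule dw_abs)
  have pdk: "pd (s,n,k) = real n + real_of_int k + 1" by (simp add: pd_def)
  have "2 * real (length w) + 2 \<le> pd (s,n,k)" using Cons.prems by simp
  then have "2 * real_of_int (int (length w)) + 2 \<le> real n + real_of_int k + 1" using pdk by simp
  then have "2 * int (length w) + 2 \<le> int n + k + 1"
    by (metis (mono_tags, opaque_lifting) of_int_add of_int_le_iff of_int_mult of_int_numeral of_int_of_nat_eq of_int_1)
  then have big: "int n' + k' \<ge> 1" using n'(2) da unfolding k'_def by linarith
  have vk: "- int n' - 1 \<le> k'" "k' \<le> int n'" using n'(3) unfolding k'_def by (auto simp: valid_def)
  show ?case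
  proof (cases g)
    case GA
    have "shiftg GA (s, n', k') = Some (s, n'+1, k'+1)" using n'(3) unfolding k'_def by (simp add: shiftGA)
    moreover have "valid (s, n'+1, k'+1)" using vk by (simp add: valid_def)
    ultimately show ?thesis using n' GA unfolding k'_def by (auto simp: dw_Cons algebra_simps)
  next
    case GAs
    have n1: "1 \<le> n'" using big vk by linarith
    have v2: "valid (s, n'-1, k'-1)" using vk big n1 by (simp add: valid_def of_nat_diff)
    have "shiftg GAs (s, n', k') = Some (s, n'-1, k'-1)"
      using n'(3) n1 v2 unfolding k'_def by (simp add: shiftGAs)
    moreover have "int (n'-1) = int n + dw (g#w)" using n'(2) n1 GAs by (simp add: dw_Cons of_nat_diff)
    ultimately show ?thesis using n' GAs v2 unfolding k'_def by (auto simp: dw_Cons algebra_simps)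
  next
    case GB then show ?thesis using gb by simp
  qed
qed

lemma idl_diag: "idl w j j = (if Ew w j = Some j then 1 else 0)"
  by (cases "Ew w j") (auto simp: idl_def basis_def)

lemma Ew_self:
  assumes "valid j" "2 * real (length w) \<le> pd j"
  shows "(if Ew w j = Some j then 1 else 0) = cw w"
proof (cases "GB \<in> set w")
  case True then show ?thesis by (simp add: Ew_GB cw_def)
next
  case False
  obtain s n k where j: "j = (s,n,k)" by (cases j) auto
  obtain n' where n': "Ew w (s,n,k) = Some (s, n', k + dw w)" "int n' = int n + dw w"
    using Ew_large[of s n k w] assms False unfolding j by blast
  have "Ew w j = Some j \<longleftrightarrow> dw w = 0" unfolding j n'(1) using n'(2) by auto
  then show ?thesis using False by (simp add: cw_def)
qed

lemma diag_approx:
  assumes h: "0 < q" "q < 1"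
  shows "\<exists>C\<ge>0. \<forall>j. valid j \<longrightarrow> cmod (apply_word q w (basis j) j - cw w) \<le> C * q powr pd j"
proof -
  obtain C where C: "0 \<le> C" "\<And>j i. cmod (apply_word q w (basis j) i - idl w j i) \<le> C * q powr pd j"
    using word_approx[OF h] by blast
  define L where "L = real (length w)"
  define D where "D = (C + 2) * q powr (-2*L)"
  have "q powr 0 \<le> q powr (-2*L)" by (rule powr_mono') (use h in \<open>auto simp: L_def\<close>)
  then have qL: "1 \<le> q powr (-2*L)" using h by simp
  have D0: "0 \<le> D" unfolding D_def using C by simp
  have "cmod (apply_word q w (basis j) j - cw w) \<le> D * q powr pd j" if vj: "valid j" for j
  proof (cases "2 * L \<le> pd j")
    case True
    then have "idl w j j = cw w" unfolding idl_diag L_def by (rule Ew_self[OF vj])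
    then have "cmod (apply_word q w (basis j) j - cw w) \<le> C * q powr pd j" using C(2)[of j j] by simp
    also have "\<dots> \<le> D * q powr pd j"
    proof (rule mult_right_mono)
      have "(C+2)*1 \<le> (C+2) * q powr (-2*L)" by (rule mult_left_mono[OF qL]) (use C in simp)
      then have "C + 2 \<le> (C+2) * q powr (-2*L)" by (simp only: mult_1_right)
      then show "C \<le> D" unfolding D_def by linarith
    qed simp
    finally show ?thesis .
  next
    case False
    have p0: "0 \<le> pd j" using valid_pd[OF vj] .
    have q1: "q powr pd j \<le> 1" using h p0 by (intro powr_le1) auto
    have i1: "cmod (idl w j j) \<le> 1" unfolding idl_diag by simp
    have c1: "cmod (cw w) \<le> 1" unfolding cw_def by simp
    have "cmod (apply_word q w (basis j) j - cw w)
        \<le> cmod (apply_word q w (basis j) j - idl w j j) + cmod (idl w j j) + cmod (cw w)"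
    proof -
      have e: "apply_word q w (basis j) j - cw w = (apply_word q w (basis j) j - idl w j j) + (idl w j j - cw w)" by simp
      have "cmod (idl w j j - cw w) \<le> cmod (idl w j j) + cmod (cw w)" by (rule norm_triangle_ineq4)
      then show ?thesis unfolding e using norm_triangle_ineq[of "apply_word q w (basis j) j - idl w j j" "idl w j j - cw w"]
        by linarith
    qed
    also have "\<dots> \<le> C * q powr pd j + 1 + 1" using C(2)[of j j] i1 c1 by linarith
    also have "\<dots> \<le> C + 2" using q1 C by (simp add: mult_left_le)
    also have "\<dots> = (C + 2) * q powr (-2*L) * q powr (2*L)" using h by (simp add: powr_add[symmetric])
    also have "\<dots> \<le> D * q powr pd j" unfolding D_def mult.assoc
    proof (rule mult_left_mono)
      have "q powr (2*L) \<le> q powr pd j" by (rule powr_mono') (use False h in auto)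
      then show "q powr (-2*L) * q powr (2*L) \<le> q powr (-2*L) * q powr pd j"
        by (rule mult_left_mono) simp
    qed (use C in simp)
    finally show ?thesis .
  qed
  then show ?thesis using D0 by blast
qed

definition cxx :: "ncpoly \<Rightarrow> complex" where
  "cxx x = (\<Sum>(c, w)\<leftarrow>x. c * cw w)"

lemma pi_entry_Cons: "pi_entry q ((c,w)#x) i j = c * apply_word q w (basis j) i + pi_entry q x i j"
  by (simp add: pi_entry_def)

lemma cxx_Cons: "cxx ((c,w)#x) = c * cw w + cxx x"
  by (simp add: cxx_def)

lemma entry_approx:
  assumes h: "0 < q" "q < 1"
  shows "\<exists>C\<ge>0. \<forall>j. valid j \<longrightarrow> cmod (pi_entry q x j j - cxx x) \<le> C * q powr pd j"
proof (induction x)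
  case Nil
  show ?case by (rule exI[of _ 0]) (simp add: pi_entry_def cxx_def)
next
  case (Cons cw' x)
  obtain c w where cw': "cw' = (c, w)" by (cases cw') auto
  obtain C1 where C1: "0 \<le> C1" "\<forall>j. valid j \<longrightarrow> cmod (apply_word q w (basis j) j - cw w) \<le> C1 * q powr pd j"
    using diag_approx[OF h] by blast
  obtain C2 where C2: "0 \<le> C2" "\<forall>j. valid j \<longrightarrow> cmod (pi_entry q x j j - cxx x) \<le> C2 * q powr pd j"
    using Cons.IH by blast
  have "cmod (pi_entry q (cw'#x) j j - cxx (cw'#x)) \<le> (cmod c * C1 + C2) * q powr pd j" if vj: "valid j" for j
  proof -
    have "pi_entry q (cw'#x) j j - cxx (cw'#x)
        = c * (apply_word q w (basis j) j - cw w) + (pi_entry q x j j - cxx x)"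
      unfolding cw' pi_entry_Cons cxx_Cons by (simp add: algebra_simps)
    then have "cmod (pi_entry q (cw'#x) j j - cxx (cw'#x))
        \<le> cmod c * cmod (apply_word q w (basis j) j - cw w) + cmod (pi_entry q x j j - cxx x)"
      by (metis norm_mult norm_triangle_ineq)
    also have "\<dots> \<le> cmod c * (C1 * q powr pd j) + C2 * q powr pd j"
      using C1(2)[rule_format, OF vj] C2(2)[rule_format, OF vj] by (intro add_mono mult_left_mono) auto
    finally show ?thesis by (simp add: algebra_simps)
  qed
  moreover have "0 \<le> cmod c * C1 + C2" using C1 C2 by simp
  ultimately show ?case by blast
qed



lemma exp_int_integral:
  fixes d :: int
  shows "((\<lambda>\<theta>. exp (\<i> * of_int d * of_real \<theta>)) has_integral (if d = 0 then complex_of_real (2*pi) else 0)) {0..2*pi}"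
proof (cases "d = 0")
  case True
  have "((\<lambda>\<theta>::real. (1::complex)) has_integral complex_of_real (2*pi)) {0..2*pi}"
    using has_integral_const_real[of "1::complex" 0 "2*pi"] by (simp add: scaleR_conv_of_real)
  then show ?thesis using True by simp
next
  case False
  define F where "F = (\<lambda>z::complex. exp (\<i> * of_int d * z) / (\<i> * of_int d))"
  have dF: "(F has_field_derivative exp (\<i> * of_int d * z)) (at z)" for z
  proof -
    have "((\<lambda>z. exp (\<i> * of_int d * z) / (\<i> * of_int d)) has_field_derivative
           (exp (\<i> * of_int d * z) * (\<i> * of_int d)) / (\<i> * of_int d)) (at z)"
      by (auto intro!: derivative_eq_intros)
    then show ?thesis unfolding F_def using False by simp
  qed
  have "((\<lambda>x. exp (\<i> * of_int d * of_real x)) has_integral (F (of_real (2*pi)) - F (of_real 0))) {0..2*pi}"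
  proof (rule fundamental_theorem_of_calculus)
    show "0 \<le> 2*pi" by simp
    fix x :: real
    show "((\<lambda>x. F (of_real x)) has_vector_derivative exp (\<i> * of_int d * of_real x)) (at x within {0..2*pi})"
      by (rule has_vector_derivative_real_field[OF dF])
  qed
  moreover have "F (of_real (2*pi)) - F (of_real 0) = 0"
  proof -
    have "exp (\<i> * of_int d * of_real (2*pi)) = exp ((2 * of_int d * of_real pi) * \<i>)"
      by (simp add: algebra_simps)
    also have "\<dots> = 1" using exp_integer_2pi[of "real_of_int d"] by simp
    finally show ?thesis unfolding F_def by simp
  qed
  ultimately show ?thesis using False by simp
qed

lemma rho_word:
  "(\<Prod>g\<leftarrow>w. rho_gen g \<theta>) = (if GB \<in> set w then 0 else exp (\<i> * of_int (dw w) * of_real \<theta>))"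
proof (induction w)
  case Nil then show ?case by (simp add: dw_def)
next
  case (Cons g w)
  show ?case
  proof (cases g)
    case GA
    have "exp (\<i> * of_real \<theta>) * exp (\<i> * of_int (dw w) * of_real \<theta>) = exp (\<i> * of_int (1 + dw w) * of_real \<theta>)"
      by (simp add: exp_add[symmetric] algebra_simps)
    then show ?thesis using Cons GA by (simp add: rho_gen_def dw_Cons)
  next
    case GAs
    have "exp (- \<i> * of_real \<theta>) * exp (\<i> * of_int (dw w) * of_real \<theta>) = exp (\<i> * of_int (-1 + dw w) * of_real \<theta>)"
      by (simp add: exp_add[symmetric] algebra_simps)
    then show ?thesis using Cons GAs by (simp add: rho_gen_def dw_Cons)
  next
    case GB
    then show ?thesis by (simp add: rho_gen_def)
  qed
qed

lemma word_integral:
  "((\<lambda>\<theta>. \<Prod>g\<leftarrow>w. rho_gen g \<theta>) has_integral (complex_of_real (2*pi) * cw w)) {0..2*pi}"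
proof (cases "GB \<in> set w")
  case True
  then show ?thesis by (simp add: rho_word cw_def)
next
  case False
  have f: "(\<lambda>\<theta>. \<Prod>g\<leftarrow>w. rho_gen g \<theta>) = (\<lambda>\<theta>. exp (\<i> * of_int (dw w) * of_real \<theta>))"
    using False by (simp add: rho_word)
  have v: "complex_of_real (2*pi) * cw w = (if dw w = 0 then complex_of_real (2*pi) else 0)"
    using False by (simp add: cw_def)
  show ?thesis unfolding f v by (rule exp_int_integral)
qed

lemma rho_integral:
  "(rho x has_integral (complex_of_real (2*pi) * cxx x)) {0..2*pi}"
proof (induction x)
  case Nil
  then show ?case by (simp add: rho_def[abs_def] cxx_def)
next
  case (Cons cw' x)
  obtain c w where cw': "cw' = (c, w)" by (cases cw') auto
  have r: "rho (cw'#x) = (\<lambda>\<theta>. c * (\<Prod>g\<leftarrow>w. rho_gen g \<theta>) + rho x \<theta>)"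
    unfolding cw' by (simp add: rho_def[abs_def])
  have "((\<lambda>\<theta>. c * (\<Prod>g\<leftarrow>w. rho_gen g \<theta>) + rho x \<theta>) has_integral
          (c * (complex_of_real (2*pi) * cw w) + complex_of_real (2*pi) * cxx x)) {0..2*pi}"
    by (intro has_integral_add has_integral_mult_right word_integral Cons.IH)
  then have "(rho (cw'#x) has_integral
          (c * (complex_of_real (2*pi) * cw w) + complex_of_real (2*pi) * cxx x)) {0..2*pi}"
    by (simp only: r)
  moreover have "c * (complex_of_real (2*pi) * cw w) + complex_of_real (2*pi) * cxx x
      = complex_of_real (2*pi) * cxx (cw'#x)"
    unfolding cw' cxx_Cons by (simp add: algebra_simps)
  ultimately show ?case by simp
qed

lemma rhs_value: "complex_of_real (2 / pi) * integral {0..2*pi} (rho x) = 4 * cxx x"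
  using integral_unique[OF rho_integral[of x]] by simp



definition blk :: "nat \<Rightarrow> idx set" where "blk n = {j. valid j \<and> fst (snd j) = n}"

lemma blk_eq: "blk n = (\<lambda>(s,k). (s,n,k)) ` (UNIV \<times> {-int n - 1..int n})"
  unfolding blk_def valid_def by (auto simp: image_iff)

lemma blk_inj: "inj_on (\<lambda>(s,k). (s,n,k)) A"
  by (auto simp: inj_on_def)

lemma blk_finite: "finite (blk n)"
  unfolding blk_eq by simp

lemma blk_card: "card (blk n) = 4 * (n + 1)"
proof -
  have "card (blk n) = card ((UNIV::bool set) \<times> {-int n - 1..int n})"
    unfolding blk_eq by (simp add: card_image blk_inj)
  also have "\<dots> = 2 * nat (int n - (- int n - 1) + 1)" by (simp add: card_cartesian_product)
  also have "\<dots> = 4 * (n + 1)" by simp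
  finally show ?thesis .
qed

lemma valid_blk: "valid j \<longleftrightarrow> j \<in> blk (fst (snd j))"
  unfolding blk_def by simp

lemma lval_blk: "j \<in> blk n \<Longrightarrow> lval j + 1/2 = real n + 1"
  unfolding blk_def lval_def by (cases j) auto

lemma geom_int_bound:
  fixes q :: real and K :: "int set"
  assumes h: "0 < q" "q < 1" and K: "finite K" "\<And>k. k \<in> K \<Longrightarrow> 0 \<le> k + c"
  shows "(\<Sum>k\<in>K. q ^ nat (k + c)) \<le> 1 / (1 - q)"
proof -
  have inj: "inj_on (\<lambda>k. nat (k + c)) K" using K(2) by (auto simp: inj_on_def) (metis eq_nat_nat_iff add_right_cancel)
  have "(\<Sum>k\<in>K. q ^ nat (k + c)) = (\<Sum>p\<in>(\<lambda>k. nat (k + c)) ` K. q ^ p)"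
    by (simp add: sum.reindex[OF inj])
  also have "\<dots> \<le> (\<Sum>p. q ^ p)"
    by (rule sum_le_suminf) (use h K in \<open>auto intro: summable_geometric\<close>)
  also have "\<dots> = 1 / (1 - q)" using h by (simp add: suminf_geometric)
  finally show ?thesis .
qed

lemma pd_blk_sum:
  assumes h: "0 < q" "q < 1"
  shows "(\<Sum>j\<in>blk n. q powr pd j) \<le> 2 / (1 - q)"
proof -
  define K where "K = {-int n - 1..int n}"
  have "(\<Sum>j\<in>blk n. q powr pd j) = (\<Sum>p\<in>(UNIV::bool set) \<times> K. q powr pd ((\<lambda>(s,k). (s,n,k)) p))"
    unfolding blk_eq K_def by (simp add: sum.reindex[OF blk_inj])
  also have "\<dots> = (\<Sum>(s,k)\<in>(UNIV::bool set) \<times> K. q ^ nat (k + (int n + 1)))"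
  proof (rule sum.cong)
    fix p :: "bool \<times> int" assume "p \<in> UNIV \<times> K"
    then obtain s k where p: "p = (s,k)" "k \<in> K" by auto
    then have "0 \<le> k + (int n + 1)" unfolding K_def by auto
    then have "real (nat (k + (int n + 1))) = real n + real_of_int k + 1" by simp
    then have "q powr (real n + real_of_int k + 1) = q ^ nat (k + (int n + 1))"
      using h by (metis powr_realpow)
    then show "q powr pd ((\<lambda>(s,k). (s,n,k)) p) = (\<lambda>(s,k). q ^ nat (k + (int n + 1))) p"
      unfolding p by (simp add: pd_def)
  qed simp
  also have "\<dots> = (\<Sum>s\<in>(UNIV::bool set). \<Sum>k\<in>K. q ^ nat (k + (int n + 1)))"
    by (rule sum.cartesian_product[symmetric])
  also have "\<dots> = 2 * (\<Sum>k\<in>K. q ^ nat (k + (int n + 1)))" by simp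
  also have "\<dots> \<le> 2 * (1 / (1 - q))"
    by (rule mult_left_mono[OF geom_int_bound[OF h]]) (auto simp: K_def)
  finally show ?thesis by simp
qed

definition En :: "real \<Rightarrow> ncpoly \<Rightarrow> nat \<Rightarrow> complex" where
  "En q x n = (\<Sum>j\<in>blk n. pi_entry q x j j - cxx x)"

lemma En_bound:
  assumes h: "0 < q" "q < 1"
  shows "\<exists>K\<ge>0. \<forall>n. cmod (En q x n) \<le> K"
proof -
  obtain C where C: "0 \<le> C" "\<forall>j. valid j \<longrightarrow> cmod (pi_entry q x j j - cxx x) \<le> C * q powr pd j"
    using entry_approx[OF h] by blast
  have "cmod (En q x n) \<le> C * (2 / (1 - q))" for n
  proof -
    have "cmod (En q x n) \<le> (\<Sum>j\<in>blk n. cmod (pi_entry q x j j - cxx x))"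
      unfolding En_def by (rule norm_sum)
    also have "\<dots> \<le> (\<Sum>j\<in>blk n. C * q powr pd j)"
      by (rule sum_mono) (use C(2) in \<open>auto simp: blk_def\<close>)
    also have "\<dots> = C * (\<Sum>j\<in>blk n. q powr pd j)" by (simp add: sum_distrib_left)
    also have "\<dots> \<le> C * (2 / (1 - q))" by (rule mult_left_mono[OF pd_blk_sum[OF h] C(1)])
    finally show ?thesis .
  qed
  moreover have "0 \<le> C * (2 / (1 - q))" using C h by simp
  ultimately show ?thesis by blast
qed

lemma entry_bounded:
  assumes h: "0 < q" "q < 1"
  shows "\<exists>B\<ge>0. \<forall>j. valid j \<longrightarrow> cmod (pi_entry q x j j) \<le> B"
proof -
  obtain C where C: "0 \<le> C" "\<forall>j. valid j \<longrightarrow> cmod (pi_entry q x j j - cxx x) \<le> C * q powr pd j"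
    using entry_approx[OF h] by blast
  have "cmod (pi_entry q x j j) \<le> cmod (cxx x) + C" if "valid j" for j
  proof -
    have "q powr pd j \<le> 1" using h valid_pd[OF that] by (intro powr_le1) auto
    then have "C * q powr pd j \<le> C" using C(1) by (simp add: mult_left_le)
    moreover have "cmod (pi_entry q x j j - cxx x) \<le> C * q powr pd j" using C(2) that by blast
    ultimately have "cmod (pi_entry q x j j - cxx x) \<le> C" by linarith
    then show ?thesis by (metis add.commute norm_triangle_sub order_trans add_left_mono)
  qed
  then show ?thesis using C(1) by (intro exI[of _ "cmod (cxx x) + C"]) auto
qed

lemma block_sums:
  fixes \<phi> :: "idx \<Rightarrow> complex"
  assumes sm: "summable (\<lambda>n. \<Sum>j\<in>blk n. norm (\<phi> j))"
  shows "(\<lambda>n. \<Sum>j\<in>blk n. \<phi> j) sums infsum \<phi> {j. valid j}"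
proof -
  define S where "S = Sigma (UNIV::nat set) blk"
  have bij: "bij_betw snd S {j. valid j}"
    unfolding bij_betw_def S_def
  proof
    show "inj_on snd (Sigma UNIV blk)" by (auto simp: inj_on_def blk_def)
    show "snd ` Sigma UNIV blk = {j. valid j}"
      by (auto simp: blk_def image_iff)
  qed
  define f where "f = (\<lambda>p::nat \<times> idx. \<phi> (snd p))"
  have "Infinite_Sum.abs_summable_on f S"
    unfolding S_def Infinite_Sum.abs_summable_on_Sigma_iff
  proof (intro conjI ballI)
    fix n :: nat show "Infinite_Sum.abs_summable_on (\<lambda>y. f (n, y)) (blk n)" using blk_finite by simp
  next
    have "\<And>n. infsum (\<lambda>y. norm (f (n, y))) (blk n) = (\<Sum>j\<in>blk n. norm (\<phi> j))"
      unfolding f_def using blk_finite by simp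
    moreover have "Infinite_Sum.abs_summable_on (\<lambda>n. \<Sum>j\<in>blk n. norm (\<phi> j)) UNIV"
    proof -
      have "(\<lambda>n. norm (\<Sum>j\<in>blk n. norm (\<phi> j))) = (\<lambda>n. \<Sum>j\<in>blk n. norm (\<phi> j))"
        by (intro ext) (simp add: sum_nonneg)
      then have "summable (\<lambda>n. norm (norm (\<Sum>j\<in>blk n. norm (\<phi> j))))" using sm by simp
      then have "(\<lambda>n. norm (\<Sum>j\<in>blk n. norm (\<phi> j))) summable_on UNIV" by (rule norm_summable_imp_summable_on)
      then show ?thesis by simp
    qed
    ultimately show "Infinite_Sum.abs_summable_on (\<lambda>n. infsum (\<lambda>y. norm (f (n, y))) (blk n)) UNIV" by simp
  qed
  then have "f summable_on S" by (rule abs_summable_summable)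
  then have fh: "(f has_sum infsum f S) S" by (rule has_sum_infsum)
  then have "(\<phi> has_sum infsum f S) {j. valid j}"
    using has_sum_reindex_bij_betw[OF bij, of \<phi>] unfolding f_def by simp
  then have eq: "infsum \<phi> {j. valid j} = infsum f S" by (rule infsumI)
  have "((\<lambda>n. \<Sum>j\<in>blk n. \<phi> j) has_sum infsum f S) UNIV"
  proof (rule has_sum_Sigma')
    show "(f has_sum infsum f S) (Sigma UNIV blk)" using fh unfolding S_def .
    fix n :: nat
    show "((\<lambda>y. f (n, y)) has_sum (\<Sum>j\<in>blk n. \<phi> j)) (blk n)"
      unfolding f_def using blk_finite by (simp add: has_sum_finite)
  qed
  then show ?thesis unfolding eq by (rule has_sum_imp_sums)
qed



definition tt :: "nat \<Rightarrow> complex \<Rightarrow> complex" where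
  "tt n s = complex_of_real (real n + 1) powr (1 - s)"
definition uu :: "nat \<Rightarrow> complex \<Rightarrow> complex" where
  "uu n s = complex_of_real (real n + 1) powr (2 - s)"
definition gg :: "nat \<Rightarrow> complex \<Rightarrow> complex" where
  "gg n s = (s - 2) * tt n s - uu n s + uu (Suc n) s"

lemma seg01: "z \<in> closed_segment 0 (1::complex) \<Longrightarrow> z = complex_of_real (Re z) \<and> 0 \<le> Re z \<and> Re z \<le> 1"
  unfolding closed_segment_def by (auto simp: scaleR_conv_of_real)

lemma dpow:
  assumes "0 < a + Re z" "z = complex_of_real (Re z)"
  shows "((\<lambda>z. (complex_of_real a + z) powr c) has_field_derivative (c * (complex_of_real a + z) powr (c - 1))) (at z within S)"
proof -
  have nz: "complex_of_real a + z \<notin> \<real>\<^sub>\<le>\<^sub>0"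
  proof -
    have "complex_of_real a + z = complex_of_real (a + Re z)" using assms(2) by (metis of_real_add)
    then show ?thesis using assms(1) by (auto simp: complex_nonpos_Reals_iff)
  qed
  have d1: "((\<lambda>z. complex_of_real a + z) has_field_derivative 1) (at z within S)"
    by (auto intro!: derivative_eq_intros)
  have "((\<lambda>z. (complex_of_real a + z) powr c) has_field_derivative (c * (complex_of_real a + z) powr (c - 1)) * 1) (at z within S)"
    by (rule DERIV_chain2[OF has_field_derivative_powr[OF nz] d1])
  then show ?thesis by simp
qed

lemma gg_bound:
  assumes s: "s \<in> ball 2 (1/2)"
  shows "cmod (gg n s) \<le> (real n + 1) powr (-3/2)"
proof -
  define a where "a = real n + 1"
  have a1: "1 \<le> a" unfolding a_def by simp
  define S where "S = closed_segment 0 (1::complex)"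
  define \<phi> where "\<phi> = (\<lambda>z. (complex_of_real a + z) powr (2 - s))"
  define \<phi>1 where "\<phi>1 = (\<lambda>z. (2 - s) * (complex_of_real a + z) powr (1 - s))"
  define \<phi>2 where "\<phi>2 = (\<lambda>z. (2 - s) * ((1 - s) * (complex_of_real a + z) powr (- s)))"
  define B where "B = a powr (-3/2)"
  have ds: "cmod (2 - s) < 1/2" using s by (simp add: dist_norm)
  have d1s: "cmod (1 - s) \<le> 3/2"
  proof -
    have "1 - s = -1 + (2 - s)" by simp
    then have "cmod (1 - s) \<le> cmod (-1::complex) + cmod (2 - s)" by (metis norm_triangle_ineq)
    then show ?thesis using ds by simp
  qed
  have res: "3/2 < Re s"
  proof -
    have "\<bar>Re (2 - s)\<bar> \<le> cmod (2 - s)" by (rule abs_Re_le_cmod)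
    then show ?thesis using ds by simp
  qed
  have segp: "z = complex_of_real (Re z) \<and> 0 \<le> Re z \<and> Re z \<le> 1" if "z \<in> S" for z
    using seg01 that unfolding S_def by blast
  have pos: "0 < a + Re z" if "z \<in> S" for z using segp[OF that] a1 by simp
  have dphi: "(\<phi> has_field_derivative \<phi>1 z) (at z within S)" if "z \<in> S" for z
    using dpow[OF pos[OF that] conjunct1[OF segp[OF that]], of "2 - s" S] unfolding \<phi>_def \<phi>1_def
    by (simp add: algebra_simps)
  have dphi1: "(\<phi>1 has_field_derivative \<phi>2 z) (at z within S)" if "z \<in> S" for z
  proof -
    have "((\<lambda>z. (2 - s) * (complex_of_real a + z) powr (1 - s)) has_field_derivative
           (2 - s) * ((1 - s) * (complex_of_real a + z) powr (1 - s - 1))) (at z within S)"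
      by (rule DERIV_cmult[OF dpow[OF pos[OF that] conjunct1[OF segp[OF that]]]])
    then show ?thesis unfolding \<phi>1_def \<phi>2_def by simp
  qed
  have b2: "cmod (\<phi>2 z) \<le> B" if zS: "z \<in> S" for z
  proof -
    obtain t where t: "z = complex_of_real t" "0 \<le> t" "t \<le> 1" using segp[OF zS] by blast
    have e: "complex_of_real a + z = complex_of_real (a + t)" using t by simp
    have "cmod ((complex_of_real a + z) powr (- s)) = (a + t) powr (- Re s)"
      unfolding e using t a1 by (subst norm_powr_real_powr) auto
    also have "\<dots> \<le> a powr (- Re s)" using t a1 res by (intro powr_mono2') auto
    also have "\<dots> \<le> a powr (-3/2)" using a1 res by (intro powr_mono) auto
    finally have p: "cmod ((complex_of_real a + z) powr (- s)) \<le> B" unfolding B_def .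
    have m: "cmod (2 - s) * cmod (1 - s) \<le> 1"
    proof -
      have "cmod (2 - s) * cmod (1 - s) \<le> (1/2) * (3/2)"
        using mult_mono[OF less_imp_le[OF ds] d1s] by simp
      then show ?thesis by simp
    qed
    have "cmod (\<phi>2 z) = (cmod (2 - s) * cmod (1 - s)) * cmod ((complex_of_real a + z) powr (- s))"
      unfolding \<phi>2_def by (simp add: norm_mult)
    also have "\<dots> \<le> 1 * B" using m p by (intro mult_mono) auto
    finally show ?thesis by simp
  qed
  have B0: "0 \<le> B" unfolding B_def by simp
  have cS: "convex S" unfolding S_def by (rule convex_closed_segment)
  have S0: "0 \<in> S" and S1: "1 \<in> S" unfolding S_def by auto
  have st1: "cmod (\<phi>1 z - \<phi>1 0) \<le> B" if zS: "z \<in> S" for z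
  proof -
    have "cmod (\<phi>1 z - \<phi>1 0) \<le> B * cmod (z - 0)"
      by (rule field_differentiable_bound[OF cS dphi1 b2 that S0])
    also have "\<dots> \<le> B * 1"
    proof (rule mult_left_mono[OF _ B0])
      have "z = complex_of_real (Re z)" "0 \<le> Re z" "Re z \<le> 1" using segp[OF zS] by auto
      then show "cmod (z - 0) \<le> 1" by (metis abs_of_nonneg diff_zero norm_of_real)
    qed
    finally show ?thesis by simp
  qed
  define \<psi> where "\<psi> = (\<lambda>z. \<phi> z - z * \<phi>1 0)"
  have dpsi: "(\<psi> has_field_derivative (\<phi>1 z - \<phi>1 0)) (at z within S)" if "z \<in> S" for z
  proof -
    have "((\<lambda>z. z * \<phi>1 0) has_field_derivative 1 * \<phi>1 0) (at z within S)"
      by (intro derivative_eq_intros) auto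
    then show ?thesis unfolding \<psi>_def using DERIV_diff[OF dphi[OF that]] by simp
  qed
  have "cmod (\<psi> 1 - \<psi> 0) \<le> B * cmod (1 - 0::complex)"
    by (rule field_differentiable_bound[OF cS dpsi st1 S1 S0])
  then have fin: "cmod (\<psi> 1 - \<psi> 0) \<le> B" by simp
  have "gg n s = \<psi> 1 - \<psi> 0"
  proof -
    have e2: "1 + complex_of_real a = complex_of_nat n + 2" unfolding a_def by simp
    show ?thesis using e2 unfolding gg_def tt_def uu_def \<psi>_def \<phi>_def \<phi>1_def a_def[symmetric]
      by (simp add: algebra_simps)
  qed
  then show ?thesis using fin unfolding B_def a_def by simp
qed



lemma series_holo:
  fixes h :: "nat \<Rightarrow> complex \<Rightarrow> complex" and S :: "complex set" and c :: "nat \<Rightarrow> real"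
  assumes S: "open S" and hol: "\<And>n. h n holomorphic_on S" and c: "summable c"
    and b: "\<And>n s. s \<in> S \<Longrightarrow> cmod (h n s) \<le> c n"
  shows "\<exists>F. F holomorphic_on S \<and> (\<forall>s\<in>S. (\<lambda>n. h n s) sums F s)"
proof -
  have hfd: "\<And>n x. x \<in> S \<Longrightarrow> (h n has_field_derivative deriv (h n) x) (at x)"
    using holomorphic_derivI[OF hol S] by blast
  have ev: "\<forall>\<^sub>F n in sequentially. \<forall>x\<in>S. norm (h n x) \<le> c n" using b by (simp add: always_eventually)
  obtain g g' where g: "\<forall>x \<in> S. ((\<lambda>n. h n x) sums g x) \<and> ((\<lambda>n. deriv (h n) x) sums g' x) \<and> (g has_field_derivative g' x) (at x)"
    using series_and_derivative_comparison[where f = h and f' = "\<lambda>n x. deriv (h n) x", OF S c hfd ev] by blast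
  have "g holomorphic_on S" unfolding holomorphic_on_open[OF S] using g by blast
  then show ?thesis using g by blast
qed

lemma summable_pow32: "summable (\<lambda>n. (real n + 1) powr (-3/2))"
proof -
  have "summable (\<lambda>n. real n powr (-3/2))" by (simp add: summable_real_powr_iff)
  then have "summable (\<lambda>n. real (Suc n) powr (-3/2))" by (subst summable_Suc_iff)
  then show ?thesis by (simp add: add.commute)
qed

lemma summable_powr_gt1: "c < -1 \<Longrightarrow> summable (\<lambda>n. (real n + 1) powr c)"
proof -
  assume "c < -1"
  then have "summable (\<lambda>n. real n powr c)" by (simp add: summable_real_powr_iff)
  then have "summable (\<lambda>n. real (Suc n) powr c)" by (subst summable_Suc_iff)
  then show ?thesis by (simp add: add.commute)
qed

lemma norm_rpow: "0 < r \<Longrightarrow> cmod (complex_of_real r powr z) = r powr Re z"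
  by (subst norm_powr_real_powr) auto

lemma gg_holo: "gg n holomorphic_on S"
  unfolding gg_def tt_def uu_def by (intro holomorphic_intros)

lemma G_exists:
  "\<exists>G. G holomorphic_on ball 2 (1/2) \<and> (\<forall>s\<in>ball 2 (1/2). (\<lambda>n. gg n s) sums G s)"
  by (rule series_holo[OF open_ball gg_holo summable_pow32 gg_bound])

lemma tt_summable: "2 < Re s \<Longrightarrow> summable (\<lambda>n. tt n s)"
proof -
  assume s: "2 < Re s"
  have "summable (\<lambda>n. (real n + 1) powr (1 - Re s))" using s by (intro summable_powr_gt1) simp
  moreover have "norm (tt n s) = (real n + 1) powr (1 - Re s)" for n
    unfolding tt_def by (subst norm_rpow) auto
  ultimately have "summable (\<lambda>n. norm (tt n s))" by simp
  then show ?thesis by (rule summable_norm_cancel)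
qed

lemma uu_lim: "2 < Re s \<Longrightarrow> (\<lambda>n. uu n s) \<longlonglongrightarrow> 0"
proof -
  assume s: "2 < Re s"
  have e: "uu n s = of_nat (Suc n) powr (2 - s)" for n
    unfolding uu_def by (metis of_nat_Suc of_real_of_nat_eq add.commute)
  have "(\<lambda>n. of_nat (Suc n) powr (2 - s)) \<longlonglongrightarrow> (0::complex)"
    by (rule tendsto_neg_powr_complex_of_nat[OF filterlim_Suc]) (use s in simp)
  then show ?thesis unfolding e .
qed

lemma tt_sum:
  assumes s: "2 < Re s" and G: "(\<lambda>n. gg n s) sums Gs"
  shows "(\<lambda>n. tt n s) sums ((1 + Gs) / (s - 2))"
proof -
  define Z where "Z = suminf (\<lambda>n. tt n s)"
  have Z: "(\<lambda>n. tt n s) sums Z" unfolding Z_def using tt_summable[OF s] by (rule summable_sums)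
  have tel: "(\<lambda>n. uu (Suc n) s - uu n s) sums (0 - uu 0 s)" by (rule telescope_sums[OF uu_lim[OF s]])
  have u0: "uu 0 s = 1" unfolding uu_def by simp
  have "(\<lambda>n. (s - 2) * tt n s + (uu (Suc n) s - uu n s)) sums ((s - 2) * Z + (0 - uu 0 s))"
    by (intro sums_add sums_mult Z tel)
  moreover have "(\<lambda>n. (s - 2) * tt n s + (uu (Suc n) s - uu n s)) = (\<lambda>n. gg n s)"
    unfolding gg_def by (simp add: algebra_simps)
  ultimately have "(\<lambda>n. gg n s) sums ((s - 2) * Z - 1)" using u0 by simp
  then have "Gs = (s - 2) * Z - 1" using G sums_unique2 by blast
  moreover have "s \<noteq> 2" using s by auto
  ultimately have "Z = (1 + Gs) / (s - 2)" by (simp add: field_simps)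
  then show ?thesis using Z by simp
qed

lemma gg_at2: "gg n 2 = 0"
proof -
  have "complex_of_real (real n + 1) \<noteq> 0" "complex_of_real (real (Suc n) + 1) \<noteq> 0"
    by (simp_all only: of_real_eq_0_iff)
  then show ?thesis unfolding gg_def uu_def tt_def by (simp only: diff_self powr_zero_eq_one if_False) simp
qed



definition ee :: "real \<Rightarrow> ncpoly \<Rightarrow> nat \<Rightarrow> complex \<Rightarrow> complex" where
  "ee q x n s = En q x n * complex_of_real (real n + 1) powr (- s)"

lemma F2_exists:
  assumes h: "0 < q" "q < 1"
  shows "\<exists>F. F holomorphic_on ball 2 (1/2) \<and> (\<forall>s\<in>ball 2 (1/2). (\<lambda>n. ee q x n s) sums F s)"
proof -
  obtain K where K: "0 \<le> K" "\<forall>n. cmod (En q x n) \<le> K" using En_bound[OF h] by blast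
  show ?thesis
  proof (rule series_holo[OF open_ball])
    show "ee q x n holomorphic_on ball 2 (1/2)" for n unfolding ee_def by (intro holomorphic_intros)
    show "summable (\<lambda>n. K * (real n + 1) powr (-3/2))" by (intro summable_mult summable_pow32)
    fix n s assume s: "s \<in> ball (2::complex) (1/2)"
    have res: "3/2 < Re s"
    proof -
      have "\<bar>Re (2 - s)\<bar> \<le> cmod (2 - s)" by (rule abs_Re_le_cmod)
      moreover have "cmod (2 - s) < 1/2" using s by (simp add: dist_norm)
      ultimately show ?thesis by simp
    qed
    have "cmod (ee q x n s) = cmod (En q x n) * (real n + 1) powr (- Re s)"
      unfolding ee_def norm_mult by (subst norm_rpow) auto
    also have "\<dots> \<le> K * (real n + 1) powr (-3/2)"
      using K res by (intro mult_mono powr_mono) auto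
    finally show "cmod (ee q x n s) \<le> K * (real n + 1) powr (-3/2)" .
  qed
qed

lemma block_identity:
  "(\<Sum>j\<in>blk n. pi_entry q x j j * complex_of_real (lval j + 1/2) powr (- s))
     = 4 * cxx x * tt n s + ee q x n s"
proof -
  define W where "W = complex_of_real (real n + 1) powr (- s)"
  have "(\<Sum>j\<in>blk n. pi_entry q x j j * complex_of_real (lval j + 1/2) powr (- s))
      = (\<Sum>j\<in>blk n. pi_entry q x j j * W)"
    unfolding W_def by (intro sum.cong) (auto simp: lval_blk)
  also have "\<dots> = (\<Sum>j\<in>blk n. pi_entry q x j j) * W" by (simp add: sum_distrib_right)
  also have "(\<Sum>j\<in>blk n. pi_entry q x j j) = of_nat (card (blk n)) * cxx x + En q x n"
    unfolding En_def by (simp add: sum_subtractf)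
  also have "of_nat (card (blk n)) = 4 * complex_of_real (real n + 1)" by (simp add: blk_card)
  also have "complex_of_real (real n + 1) * W = tt n s"
  proof -
    have nz: "complex_of_real (real n + 1) \<noteq> 0" by (simp only: of_real_eq_0_iff)
    have "complex_of_real (real n + 1) * W = complex_of_real (real n + 1) powr 1 * complex_of_real (real n + 1) powr (- s)"
      unfolding W_def by simp
    also have "\<dots> = complex_of_real (real n + 1) powr (1 + - s)" by (simp only: powr_add)
    finally show ?thesis unfolding tt_def by simp
  qed
  then have "(4 * complex_of_real (real n + 1) * cxx x + En q x n) * W = 4 * cxx x * tt n s + ee q x n s"
  proof -
    assume eq: "complex_of_real (real n + 1) * W = tt n s"
    have "(4 * complex_of_real (real n + 1) * cxx x + En q x n) * W
        = 4 * cxx x * (complex_of_real (real n + 1) * W) + En q x n * W" by (simp add: algebra_simps)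
    also have "\<dots> = 4 * cxx x * tt n s + ee q x n s" by (simp only: eq ee_def W_def[symmetric])
    finally show ?thesis .
  qed
  finally show ?thesis .
qed

lemma norms_summable:
  assumes h: "0 < q" "q < 1" and s: "2 < Re s"
  shows "summable (\<lambda>n. \<Sum>j\<in>blk n. norm (pi_entry q x j j * complex_of_real (lval j + 1/2) powr (- s)))"
proof -
  obtain B where B: "0 \<le> B" "\<forall>j. valid j \<longrightarrow> cmod (pi_entry q x j j) \<le> B" using entry_bounded[OF h] by blast
  have le: "(\<Sum>j\<in>blk n. norm (pi_entry q x j j * complex_of_real (lval j + 1/2) powr (- s)))
        \<le> 4 * B * (real n + 1) powr (1 - Re s)" for n
  proof -
    have "(\<Sum>j\<in>blk n. norm (pi_entry q x j j * complex_of_real (lval j + 1/2) powr (- s)))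
        \<le> (\<Sum>j\<in>blk n. B * (real n + 1) powr (- Re s))"
    proof (rule sum_mono)
      fix j assume j: "j \<in> blk n"
      have "norm (pi_entry q x j j * complex_of_real (lval j + 1/2) powr (- s))
          = cmod (pi_entry q x j j) * (real n + 1) powr (- Re s)"
        unfolding norm_mult lval_blk[OF j] by (subst norm_rpow) auto
      also have "\<dots> \<le> B * (real n + 1) powr (- Re s)"
      proof (rule mult_right_mono)
        have vj: "valid j" using j by (simp add: blk_def)
        show "cmod (pi_entry q x j j) \<le> B" using B(2)[rule_format, OF vj] .
      qed simp
      finally show "norm (pi_entry q x j j * complex_of_real (lval j + 1/2) powr (- s)) \<le> B * (real n + 1) powr (- Re s)" .
    qed
    also have "\<dots> = real (4 * (n + 1)) * (B * (real n + 1) powr (- Re s))" by (simp add: blk_card)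
    also have "\<dots> = 4 * B * ((real n + 1) * (real n + 1) powr (- Re s))" by (simp add: algebra_simps)
    also have "(real n + 1) * (real n + 1) powr (- Re s) = (real n + 1) powr (1 - Re s)"
      by (simp add: powr_diff powr_minus divide_inverse)
    finally show ?thesis .
  qed
  show ?thesis
  proof (rule summable_comparison_test)
    show "\<exists>N. \<forall>n\<ge>N. norm (\<Sum>j\<in>blk n. norm (pi_entry q x j j * complex_of_real (lval j + 1/2) powr (- s)))
           \<le> 4 * B * (real n + 1) powr (1 - Re s)"
      using le by (simp add: sum_nonneg)
    show "summable (\<lambda>n. 4 * B * (real n + 1) powr (1 - Re s))"
      using s by (intro summable_mult summable_powr_gt1) simp
  qed
qed

theorem mainTheorem10:
  fixes q :: real and x :: ncpoly
  assumes "0 < q" and "q < 1"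
  shows "\<exists>f r. r > 0 \<and> f holomorphic_on (ball 2 r - {2})
           \<and> (\<forall>s\<in>ball 2 r. Re s > 2 \<longrightarrow> f s = zeta q x s)
           \<and> residue f 2 = complex_of_real (2 / pi) * integral {0..2*pi} (rho x)"
proof -
  note h = assms
  define B where "B = ball (2::complex) (1/2)"
  obtain G where G: "G holomorphic_on B" "\<forall>s\<in>B. (\<lambda>n. gg n s) sums G s"
    using G_exists unfolding B_def by blast
  obtain F where F: "F holomorphic_on B" "\<forall>s\<in>B. (\<lambda>n. ee q x n s) sums F s"
    using F2_exists[OF h, of x] unfolding B_def by blast
  define f1 where "f1 = (\<lambda>s. 4 * cxx x * (1 + G s) / (s - 2))"
  define f where "f = (\<lambda>s. f1 s + F s)"
  have oB: "open B" and cB: "2 \<in> B" unfolding B_def by auto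
  have f1h: "f1 holomorphic_on B - {2}" unfolding f1_def
    by (intro holomorphic_intros holomorphic_on_subset[OF G(1)]) auto
  have Fh: "F holomorphic_on B - {2}" by (rule holomorphic_on_subset[OF F(1)]) auto
  have fh: "f holomorphic_on B - {2}" unfolding f_def by (intro holomorphic_intros f1h Fh)
  have G2: "G 2 = 0"
  proof -
    have "(\<lambda>n. gg n 2) sums 0" by (simp add: gg_at2)
    then show ?thesis using G(2) cB sums_unique2 by blast
  qed
  have res: "residue f 2 = 4 * cxx x"
  proof -
    have "residue f 2 = residue f1 2 + residue F 2"
      unfolding f_def by (rule residue_add[OF oB cB f1h Fh])
    moreover have "residue f1 2 = 4 * cxx x * (1 + G 2)"
      unfolding f1_def
      by (rule residue_simple[OF oB cB, of "\<lambda>w. 4 * cxx x * (1 + G w)"]) (intro holomorphic_intros G(1))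
    moreover have "residue F 2 = 0" by (rule residue_holo[OF oB cB F(1)])
    ultimately show ?thesis using G2 by simp
  qed
  have agree: "f s = zeta q x s" if sB: "s \<in> B" and sre: "Re s > 2" for s
  proof -
    have "(\<lambda>n. \<Sum>j\<in>blk n. pi_entry q x j j * complex_of_real (lval j + 1/2) powr (- s))
           sums infsum (\<lambda>j. pi_entry q x j j * complex_of_real (lval j + 1/2) powr (- s)) {j. valid j}"
      by (rule block_sums[OF norms_summable[OF h sre]])
    then have z: "(\<lambda>n. 4 * cxx x * tt n s + ee q x n s) sums zeta q x s"
      unfolding block_identity zeta_def .
    have "(\<lambda>n. 4 * cxx x * tt n s + ee q x n s) sums (4 * cxx x * ((1 + G s) / (s - 2)) + F s)"
      by (intro sums_add sums_mult tt_sum[OF sre] F(2)[rule_format, OF sB] G(2)[rule_format, OF sB])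
    then have "zeta q x s = 4 * cxx x * ((1 + G s) / (s - 2)) + F s" using z sums_unique2 by blast
    then show ?thesis unfolding f_def f1_def by simp
  qed
  show ?thesis
  proof (intro exI conjI)
    show "(1/2::real) > 0" by simp
    show "f holomorphic_on ball 2 (1/2) - {2}" using fh unfolding B_def .
    show "\<forall>s\<in>ball 2 (1/2). Re s > 2 \<longrightarrow> f s = zeta q x s" using agree unfolding B_def by blast
    show "residue f 2 = complex_of_real (2 / pi) * integral {0..2*pi} (rho x)"
      unfolding res rhs_value ..
  qed
qed


end
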